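(* Let $\mathcal{H}$ be an infinite-dimensional separable complex Hilbert space, let $\mathcal{T}_1(\mathcal{H})_{\mathrm{sa}}$ be the real Banach space of selfadjoint trace class operators on $\mathcal{H}$, let $\mathcal{F}(\mathcal{H})_{\mathrm{sa}}$ be the linear manifold of selfadjoint finite-rank operators, and for $k\in\mathbb{N}$ let $\mathcal{P}_k(\mathcal{H})$ be the set of orthogonal projections of rank $k$. Let $\mathcal{L}$ be a linear operator in $\mathcal{T}_1(\mathcal{H})_{\mathrm{sa}}$ with domain $\mathrm{dom}(\mathcal{L})=\mathcal{F}(\mathcal{H})_{\mathrm{sa}}$ such that $\mathcal{L}(\mathcal{P}_k(\mathcal{H}))=\mathcal{P}_k(\mathcal{H})$ for some $k\in\mathbb{N}$; if $k>1$, assume also that $\mathcal{L}$ is injective. Then $\mathcal{L}$ maps $\mathcal{F}(\mathcal{H})_{\mathrm{sa}}$ bijectively onto itself. *)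

theory Defs
  imports Complex_Main
begin

text \<open>The separable infinite-dimensional complex Hilbert space is modelled concretely
  as l2(N): square-summable complex sequences.  Every such space is unitarily
  isomorphic to l2(N) and the statement is invariant under unitary equivalence.\<close>

type_synonym vec = "nat \<Rightarrow> complex"
type_synonym op = "vec \<Rightarrow> vec"

definition l2 :: "vec set" where
  "l2 = {x. summable (\<lambda>n. (cmod (x n))\<^sup>2)}"

definition l2inner :: "vec \<Rightarrow> vec \<Rightarrow> complex" where
  "l2inner x y = (\<Sum>n. x n * cnj (y n))"

definition l2norm :: "vec \<Rightarrow> real" where
  "l2norm x = sqrt (\<Sum>n. (cmod (x n))\<^sup>2)"

definition basis_vec :: "nat \<Rightarrow> vec" where
  "basis_vec k = (\<lambda>n. if n = k then 1 else 0)"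

text \<open>Bounded (complex-linear) operators on l2; normalised to be 0 off l2 so that
  operator equality is function equality.\<close>
definition bounded_op :: "op \<Rightarrow> bool" where
  "bounded_op T \<longleftrightarrow>
     (\<forall>x\<in>l2. T x \<in> l2) \<and>
     (\<forall>x. x \<notin> l2 \<longrightarrow> T x = (\<lambda>n. 0)) \<and>
     (\<forall>x\<in>l2. \<forall>y\<in>l2. \<forall>a b::complex.
        T (\<lambda>n. a * x n + b * y n) = (\<lambda>n. a * T x n + b * T y n)) \<and>
     (\<exists>C. \<forall>x\<in>l2. l2norm (T x) \<le> C * l2norm x)"

definition selfadjoint_op :: "op \<Rightarrow> bool" where
  "selfadjoint_op T \<longleftrightarrow> bounded_op T \<and>
     (\<forall>x\<in>l2. \<forall>y\<in>l2. l2inner (T x) y = l2inner x (T y))"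

definition cspan :: "vec set \<Rightarrow> vec set" where
  "cspan B = {(\<lambda>n. \<Sum>b\<in>B. c b * b n) | c. True}"

definition clin_indep :: "vec set \<Rightarrow> bool" where
  "clin_indep B \<longleftrightarrow> finite B \<and>
     (\<forall>c. (\<lambda>n. \<Sum>b\<in>B. c b * b n) = (\<lambda>n. 0) \<longrightarrow> (\<forall>b\<in>B. c b = 0))"

definition has_rank :: "op \<Rightarrow> nat \<Rightarrow> bool" where
  "has_rank T k \<longleftrightarrow> (\<exists>B. B \<subseteq> l2 \<and> clin_indep B \<and> card B = k \<and> T ` l2 = cspan B)"

definition finite_rank :: "op \<Rightarrow> bool" where
  "finite_rank T \<longleftrightarrow> (\<exists>k. has_rank T k)"

definition hilbert_schmidt :: "op \<Rightarrow> bool" where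
  "hilbert_schmidt T \<longleftrightarrow> bounded_op T \<and> summable (\<lambda>n. (l2norm (T (basis_vec n)))\<^sup>2)"

definition trace_class :: "op \<Rightarrow> bool" where
  "trace_class T \<longleftrightarrow> (\<exists>A B. hilbert_schmidt A \<and> hilbert_schmidt B \<and> T = A \<circ> B)"

definition T1sa :: "op set" where
  "T1sa = {T. trace_class T \<and> selfadjoint_op T}"

definition Fsa :: "op set" where
  "Fsa = {T. finite_rank T \<and> selfadjoint_op T}"

definition Proj :: "nat \<Rightarrow> op set" where
  "Proj k = {P. selfadjoint_op P \<and> P \<circ> P = P \<and> has_rank P k}"

definition op_add :: "op \<Rightarrow> op \<Rightarrow> op" where
  "op_add S T = (\<lambda>x n. S x n + T x n)"

definition op_scale :: "real \<Rightarrow> op \<Rightarrow> op" where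
  "op_scale a T = (\<lambda>x n. complex_of_real a * T x n)"

end

theory Submission
  imports Defs "HOL-Library.Function_Algebras"
begin


definition sc :: "complex \<Rightarrow> vec \<Rightarrow> vec" where
  "sc c x = (\<lambda>n. c * x n)"

abbreviation ip :: "vec \<Rightarrow> vec \<Rightarrow> complex" where
  "ip \<equiv> l2inner"

lemma sum_apply: "(\<Sum>i\<in>A. f i) x = (\<Sum>i\<in>A. f i x)"
  by (induction A rule: infinite_finite_induct) auto

lemma sc_apply: "sc c x n = c * x n" by (simp add: sc_def)

lemma l2_iff: "x \<in> l2 \<longleftrightarrow> summable (\<lambda>n. (cmod (x n))\<^sup>2)"
  by (simp add: l2_def)

lemma summable_prod_l2:
  assumes "x \<in> l2" "y \<in> l2"
  shows "summable (\<lambda>n. x n * cnj (y n))"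
proof (rule summable_comparison_test)
  have s: "summable (\<lambda>n. ((cmod (x n))\<^sup>2 + (cmod (y n))\<^sup>2) / 2)"
    using assms by (intro summable_divide summable_add) (auto simp: l2_iff)
  show "summable (\<lambda>n. ((cmod (x n))\<^sup>2 + (cmod (y n))\<^sup>2) / 2)" by (fact s)
  show "\<exists>N. \<forall>n\<ge>N. norm (x n * cnj (y n)) \<le> ((cmod (x n))\<^sup>2 + (cmod (y n))\<^sup>2) / 2"
  proof (intro exI allI impI)
    fix n
    have "0 \<le> (cmod (x n) - cmod (y n))\<^sup>2" by simp
    then show "norm (x n * cnj (y n)) \<le> ((cmod (x n))\<^sup>2 + (cmod (y n))\<^sup>2) / 2"
      by (simp add: norm_mult power2_eq_square algebra_simps)
  qed
qed

lemma l2_zero[simp, intro]: "(0::vec) \<in> l2"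
  by (simp add: l2_iff)

lemma l2_zero'[simp, intro]: "(\<lambda>n. 0::complex) \<in> l2"
  by (simp add: l2_iff)

lemma l2_add[simp,intro]:
  assumes "x \<in> l2" "y \<in> l2" shows "x + y \<in> l2"
  unfolding l2_iff
proof (rule summable_comparison_test)
  show "summable (\<lambda>n. 2 * (cmod (x n))\<^sup>2 + 2 * (cmod (y n))\<^sup>2)"
    using assms by (intro summable_add summable_mult) (auto simp: l2_iff)
  show "\<exists>N. \<forall>n\<ge>N. norm ((cmod ((x + y) n))\<^sup>2) \<le> 2 * (cmod (x n))\<^sup>2 + 2 * (cmod (y n))\<^sup>2"
  proof (intro exI allI impI)
    fix n
    have "cmod (x n + y n) \<le> cmod (x n) + cmod (y n)" by (rule norm_triangle_ineq)
    then have "(cmod (x n + y n))\<^sup>2 \<le> (cmod (x n) + cmod (y n))\<^sup>2"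
      by (simp add: power_mono)
    also have "\<dots> \<le> 2 * (cmod (x n))\<^sup>2 + 2 * (cmod (y n))\<^sup>2"
      using sum_squares_ge_zero[of "cmod (x n) - cmod (y n)" 0]
      by (simp add: power2_eq_square algebra_simps)
    finally show "norm ((cmod ((x + y) n))\<^sup>2) \<le> 2 * (cmod (x n))\<^sup>2 + 2 * (cmod (y n))\<^sup>2"
      by simp
  qed
qed

lemma l2_sc[simp,intro]: assumes "x \<in> l2" shows "sc c x \<in> l2"
proof -
  have "summable (\<lambda>n. (cmod c)\<^sup>2 * (cmod (x n))\<^sup>2)"
    using assms by (intro summable_mult) (auto simp: l2_iff)
  then show ?thesis by (simp add: l2_iff norm_mult power_mult_distrib sc_apply)
qed

lemma l2_uminus[simp,intro]: assumes "x \<in> l2" shows "- x \<in> l2"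
  using assms by (simp add: l2_iff)

lemma l2_diff[simp,intro]: assumes "x \<in> l2" "y \<in> l2" shows "x - y \<in> l2"
  using l2_add[OF assms(1) l2_uminus[OF assms(2)]] by simp

lemma l2_sum[intro]: "(\<And>i. i \<in> A \<Longrightarrow> f i \<in> l2) \<Longrightarrow> sum f A \<in> l2"
  by (induction A rule: infinite_finite_induct) auto

lemma l2_basis[simp,intro]: "basis_vec k \<in> l2"
proof -
  have "(\<lambda>n. (cmod (basis_vec k n))\<^sup>2) = (\<lambda>n. if n = k then 1 else 0)"
    by (auto simp: basis_vec_def)
  then show ?thesis unfolding l2_iff by (simp add: summable_single)
qed

lemma ip_def': "ip x y = (\<Sum>n. x n * cnj (y n))" by (simp add: l2inner_def)

lemma ip_add_left: "x \<in> l2 \<Longrightarrow> y \<in> l2 \<Longrightarrow> z \<in> l2 \<Longrightarrow> ip (x + y) z = ip x z + ip y z"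
  unfolding l2inner_def
  by (simp add: distrib_right suminf_add[OF summable_prod_l2 summable_prod_l2])

lemma ip_sc_left: "x \<in> l2 \<Longrightarrow> y \<in> l2 \<Longrightarrow> ip (sc c x) y = c * ip x y"
  unfolding l2inner_def
  by (simp add: mult.assoc suminf_mult[OF summable_prod_l2] sc_apply)

lemma ip_sums: "x \<in> l2 \<Longrightarrow> y \<in> l2 \<Longrightarrow> (\<lambda>n. x n * cnj (y n)) sums ip x y"
  unfolding l2inner_def by (intro summable_sums summable_prod_l2)

lemma ip_cnj: "x \<in> l2 \<Longrightarrow> y \<in> l2 \<Longrightarrow> ip y x = cnj (ip x y)"
proof -
  assume a: "x \<in> l2" "y \<in> l2"
  have "(\<lambda>n. cnj (x n * cnj (y n))) sums cnj (ip x y)"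
    using ip_sums[OF a] by (simp only: sums_cnj)
  then have "(\<lambda>n. y n * cnj (x n)) sums cnj (ip x y)" by (simp add: mult.commute)
  then show ?thesis using ip_sums[OF a(2) a(1)] sums_unique2 by blast
qed

lemma ip_add_right: "x \<in> l2 \<Longrightarrow> y \<in> l2 \<Longrightarrow> z \<in> l2 \<Longrightarrow> ip z (x + y) = ip z x + ip z y"
  by (subst (1 2 3) ip_cnj) (auto simp: ip_add_left)

lemma ip_sc_right: "x \<in> l2 \<Longrightarrow> y \<in> l2 \<Longrightarrow> ip y (sc c x) = cnj c * ip y x"
  by (subst (1 2) ip_cnj) (auto simp: ip_sc_left)

lemma ip_zero_left[simp]: "ip 0 y = 0" by (simp add: l2inner_def)
lemma ip_zero_right[simp]: "ip y 0 = 0" by (simp add: l2inner_def)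

lemma ip_uminus_left: "x \<in> l2 \<Longrightarrow> y \<in> l2 \<Longrightarrow> ip (- x) y = - ip x y"
proof -
  assume a: "x \<in> l2" "y \<in> l2"
  have "- x = sc (-1) x" by (simp add: fun_eq_iff sc_apply)
  then show ?thesis using ip_sc_left[OF a, of "-1"] by simp
qed

lemma ip_diff_left: "x \<in> l2 \<Longrightarrow> y \<in> l2 \<Longrightarrow> z \<in> l2 \<Longrightarrow> ip (x - y) z = ip x z - ip y z"
  using ip_add_left[of x "-y" z] ip_uminus_left[of y z] by auto

lemma ip_diff_right: "x \<in> l2 \<Longrightarrow> y \<in> l2 \<Longrightarrow> z \<in> l2 \<Longrightarrow> ip z (x - y) = ip z x - ip z y"
  by (subst (1 2 3) ip_cnj) (auto simp: ip_diff_left)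

lemma ip_sum_left: "(\<And>i. i \<in> A \<Longrightarrow> f i \<in> l2) \<Longrightarrow> y \<in> l2 \<Longrightarrow> ip (sum f A) y = (\<Sum>i\<in>A. ip (f i) y)"
  by (induction A rule: infinite_finite_induct) (auto simp: ip_add_left[OF _ l2_sum])

lemma ip_sum_right: "(\<And>i. i \<in> A \<Longrightarrow> f i \<in> l2) \<Longrightarrow> y \<in> l2 \<Longrightarrow> ip y (sum f A) = (\<Sum>i\<in>A. ip y (f i))"
  by (induction A rule: infinite_finite_induct) (auto simp: ip_add_right[OF _ l2_sum])

definition nrm2 :: "vec \<Rightarrow> real" where "nrm2 x = (\<Sum>n. (cmod (x n))\<^sup>2)"

lemma ip_self: "x \<in> l2 \<Longrightarrow> ip x x = complex_of_real (nrm2 x)"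
proof -
  assume a: "x \<in> l2"
  have "(\<lambda>n. (cmod (x n))\<^sup>2) sums nrm2 x" using a by (simp add: l2_iff nrm2_def summable_sums)
  then have "(\<lambda>n. complex_of_real ((cmod (x n))\<^sup>2)) sums complex_of_real (nrm2 x)"
    by (rule sums_of_real)
  moreover have "\<And>n. complex_of_real ((cmod (x n))\<^sup>2) = x n * cnj (x n)"
    by (rule complex_norm_square)
  ultimately have "(\<lambda>n. x n * cnj (x n)) sums complex_of_real (nrm2 x)"
    by simp
  then show ?thesis using ip_sums[OF a a] sums_unique2 by blast
qed

lemma nrm2_nonneg: "x \<in> l2 \<Longrightarrow> nrm2 x \<ge> 0"
  unfolding nrm2_def l2_iff by (intro suminf_nonneg) auto

lemma nrm2_zero: "x \<in> l2 \<Longrightarrow> nrm2 x = 0 \<Longrightarrow> x = 0"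
proof -
  assume a: "x \<in> l2" "nrm2 x = 0"
  then have "\<forall>n. (cmod (x n))\<^sup>2 = 0"
    using suminf_eq_zero_iff[of "\<lambda>n. (cmod (x n))\<^sup>2"] by (auto simp: l2_iff nrm2_def)
  then show "x = 0" by (auto simp: fun_eq_iff)
qed

lemma l2norm_nrm2: "l2norm x = sqrt (nrm2 x)" by (simp add: l2norm_def nrm2_def)

lemma Re_ip_self: "x \<in> l2 \<Longrightarrow> Re (ip x x) = nrm2 x" by (simp add: ip_self)
lemma Im_ip_self: "x \<in> l2 \<Longrightarrow> Im (ip x x) = 0" by (simp add: ip_self)

lemma ip_self_zero: "x \<in> l2 \<Longrightarrow> ip x x = 0 \<Longrightarrow> x = 0"
  by (simp add: ip_self nrm2_zero)


lemma cauchy_schwarz: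
  assumes x: "x \<in> l2" and y: "y \<in> l2"
  shows "(cmod (ip x y))\<^sup>2 \<le> nrm2 x * nrm2 y"
proof (cases "y = 0")
  case True then show ?thesis by (simp add: nrm2_def)
next
  case False
  define n where "n = nrm2 y"
  have n0: "n > 0" using nrm2_nonneg[OF y] nrm2_zero[OF y] False unfolding n_def by force
  define a where "a = ip x y"
  define c where "c = a / complex_of_real n"
  define z where "z = x - sc c y"
  have z: "z \<in> l2" unfolding z_def using x y by auto
  have yy: "ip y y = complex_of_real n" by (simp add: ip_self y n_def)
  have yx: "ip y x = cnj a" unfolding a_def by (rule ip_cnj[OF x y])
  have "ip z z = ip x (x - sc c y) - ip (sc c y) (x - sc c y)"
    unfolding z_def using x y by (simp add: ip_diff_left)
  also have "\<dots> = ip x x - ip x (sc c y) - (ip (sc c y) x - ip (sc c y) (sc c y))"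
    using x y by (simp add: ip_diff_right)
  also have "\<dots> = ip x x - cnj c * ip x y - c * ip y x + c * cnj c * ip y y"
    using x y by (simp add: ip_sc_left ip_sc_right algebra_simps)
  also have "\<dots> = ip x x - a * cnj a / complex_of_real n"
    unfolding yy yx a_def[symmetric] c_def using n0
    by (simp add: field_simps power2_eq_square)
  finally have "Re (ip z z) = nrm2 x - (cmod a)\<^sup>2 / n"
    using x by (simp add: ip_self complex_mult_cnj cmod_power2)
  moreover have "Re (ip z z) \<ge> 0" using z by (simp add: ip_self nrm2_nonneg)
  ultimately have "(cmod a)\<^sup>2 / n \<le> nrm2 x" by simp
  then show ?thesis using n0 unfolding a_def n_def by (simp add: field_simps)
qed

lemma cs_norm: "x \<in> l2 \<Longrightarrow> y \<in> l2 \<Longrightarrow> cmod (ip x y) \<le> l2norm x * l2norm y"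
proof -
  assume x: "x \<in> l2" and y: "y \<in> l2"
  have "sqrt ((cmod (ip x y))\<^sup>2) \<le> sqrt (nrm2 x * nrm2 y)"
    using cauchy_schwarz[OF x y] by (rule real_sqrt_le_mono)
  then show ?thesis by (simp add: l2norm_nrm2 real_sqrt_mult)
qed

lemma nrm2_add: "x \<in> l2 \<Longrightarrow> y \<in> l2 \<Longrightarrow> nrm2 (x + y) = nrm2 x + nrm2 y + 2 * Re (ip x y)"
proof -
  assume x: "x \<in> l2" and y: "y \<in> l2"
  have "ip (x + y) (x + y) = ip x (x + y) + ip y (x + y)"
    using x y by (simp add: ip_add_left)
  also have "\<dots> = ip x x + ip y y + (ip x y + ip y x)"
    using x y by (simp add: ip_add_right)
  finally have "ip (x + y) (x + y) = ip x x + ip y y + (ip x y + cnj (ip x y))"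
    using ip_cnj[OF x y] by simp
  then have "Re (ip (x + y) (x + y)) = Re (ip x x) + Re (ip y y) + 2 * Re (ip x y)" by simp
  then show ?thesis using x y by (simp add: Re_ip_self)
qed

lemma l2norm_nonneg: "x \<in> l2 \<Longrightarrow> l2norm x \<ge> 0" by (simp add: l2norm_nrm2 nrm2_nonneg)

lemma l2norm_triangle: "x \<in> l2 \<Longrightarrow> y \<in> l2 \<Longrightarrow> l2norm (x + y) \<le> l2norm x + l2norm y"
proof -
  assume x: "x \<in> l2" and y: "y \<in> l2"
  have "Re (ip x y) \<le> l2norm x * l2norm y" using cs_norm[OF x y] complex_Re_le_cmod order_trans by blast
  then have "nrm2 (x + y) \<le> (l2norm x + l2norm y)\<^sup>2"
    using x y nrm2_nonneg[OF x] nrm2_nonneg[OF y]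
    by (simp add: nrm2_add power2_sum l2norm_nrm2)
  then have "sqrt (nrm2 (x + y)) \<le> sqrt ((l2norm x + l2norm y)\<^sup>2)"
    by (rule real_sqrt_le_mono)
  then show ?thesis using l2norm_nonneg[OF x] l2norm_nonneg[OF y]
    by (simp add: l2norm_nrm2)
qed

lemma nrm2_sc: "x \<in> l2 \<Longrightarrow> nrm2 (sc c x) = (cmod c)\<^sup>2 * nrm2 x"
proof -
  assume x: "x \<in> l2"
  have "ip (sc c x) (sc c x) = c * ip x (sc c x)" using x by (simp add: ip_sc_left)
  also have "\<dots> = c * cnj c * ip x x" using x by (simp add: ip_sc_right)
  finally have "ip (sc c x) (sc c x) = c * cnj c * ip x x" .
  then have "Re (ip (sc c x) (sc c x)) = (cmod c)\<^sup>2 * Re (ip x x)"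
    by (simp add: complex_norm_square[symmetric] del: complex_norm_square)
  then show ?thesis using x by (simp add: Re_ip_self)
qed

lemma l2norm_sc: "x \<in> l2 \<Longrightarrow> l2norm (sc c x) = cmod c * l2norm x"
  by (simp add: l2norm_nrm2 nrm2_sc real_sqrt_mult)

lemma l2norm_sum: "(\<And>i. i \<in> A \<Longrightarrow> f i \<in> l2) \<Longrightarrow> l2norm (sum f A) \<le> (\<Sum>i\<in>A. l2norm (f i))"
proof (induction A rule: infinite_finite_induct)
  case (infinite A) then show ?case by (simp add: l2norm_def)
next
  case empty then show ?case by (simp add: l2norm_def)
next
  case (insert a A)
  have "l2norm (sum f (insert a A)) = l2norm (f a + sum f A)" using insert(1,2) by simp
  also have "\<dots> \<le> l2norm (f a) + l2norm (sum f A)"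
    using insert by (intro l2norm_triangle l2_sum) auto
  also have "\<dots> \<le> l2norm (f a) + (\<Sum>i\<in>A. l2norm (f i))" using insert by auto
  finally show ?case using sum.insert[OF insert(1,2), of "\<lambda>i. l2norm (f i)"] by linarith
qed


interpretation V: vector_space sc
  by unfold_locales (auto simp: fun_eq_iff algebra_simps sc_apply)

lemma sum_sc_apply: "(\<Sum>v\<in>S. sc (u v) (g v)) = (\<lambda>n. \<Sum>v\<in>S. u v * g v n)"
  by (simp add: fun_eq_iff sum_apply sc_apply)

lemma subspace_l2: "V.subspace l2"
  by (auto simp: V.subspace_def)

lemma span_l2: "E \<subseteq> l2 \<Longrightarrow> V.span E \<subseteq> l2"
  using V.span_minimal subspace_l2 by blast

lemma cspan_eq: "finite B \<Longrightarrow> cspan B = V.span B"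
  by (auto simp: cspan_def V.span_finite sum_sc_apply)

lemma clin_indep_iff: "clin_indep B \<longleftrightarrow> finite B \<and> V.independent B"
proof (cases "finite B")
  case True
  then show ?thesis
    unfolding clin_indep_def V.dependent_finite[OF True] sum_sc_apply
    by (auto simp: zero_fun_def)
qed (simp add: clin_indep_def)

lemma ip_lincomb_left:
  "(\<And>v. v \<in> S \<Longrightarrow> v \<in> l2) \<Longrightarrow> y \<in> l2 \<Longrightarrow> ip (\<Sum>v\<in>S. sc (u v) v) y = (\<Sum>v\<in>S. u v * ip v y)"
  by (simp add: ip_sum_left ip_sc_left)

definition orthonormal :: "vec set \<Rightarrow> bool" where
  "orthonormal E \<longleftrightarrow> E \<subseteq> l2 \<and> (\<forall>e\<in>E. ip e e = 1) \<and> (\<forall>e\<in>E. \<forall>f\<in>E. e \<noteq> f \<longrightarrow> ip e f = 0)"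

lemma orthonormal_ip: "orthonormal E \<Longrightarrow> e \<in> E \<Longrightarrow> f \<in> E \<Longrightarrow> ip e f = (if e = f then 1 else 0)"
  by (auto simp: orthonormal_def)

lemma orth_sum_ip:
  assumes "orthonormal E" "finite E" "f \<in> E"
  shows "(\<Sum>e\<in>E. u e * ip e f) = u f"
proof -
  have "(\<Sum>e\<in>E. u e * ip e f) = (\<Sum>e\<in>E. if e = f then u f else 0)"
    using assms by (intro sum.cong) (auto simp: orthonormal_ip)
  then show ?thesis using assms by simp
qed

lemma orth_expand:
  assumes E: "orthonormal E" "finite E" and y: "y \<in> V.span E"
  shows "y = (\<Sum>e\<in>E. sc (ip y e) e)"
proof -
  obtain u where u: "y = (\<Sum>v\<in>E. sc (u v) v)"
    using y V.span_finite[OF E(2)] by auto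
  have El2: "\<And>v. v \<in> E \<Longrightarrow> v \<in> l2" using E by (auto simp: orthonormal_def)
  have "\<And>e. e \<in> E \<Longrightarrow> ip y e = u e"
    unfolding u using E El2 by (simp add: ip_lincomb_left orth_sum_ip)
  then show ?thesis unfolding u by (intro sum.cong) auto
qed

lemma orth_independent:
  assumes E: "orthonormal E" "finite E"
  shows "V.independent E"
proof -
  have El2: "\<And>v. v \<in> E \<Longrightarrow> v \<in> l2" using E by (auto simp: orthonormal_def)
  show ?thesis
  proof (rule V.independent_if_scalars_zero[OF E(2)])
    fix u x assume s: "(\<Sum>x\<in>E. sc (u x) x) = 0" and x: "x \<in> E"
    have "ip (\<Sum>x\<in>E. sc (u x) x) x = u x"
      using E El2 x by (simp add: ip_lincomb_left orth_sum_ip)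
    then show "u x = 0" using s by simp
  qed
qed

lemma span_insert_cong: "V.span A = V.span A' \<Longrightarrow> V.span (insert b A) = V.span (insert b A')"
  by (metis V.span_insert)

lemma gram_schmidt:
  assumes "finite B" "B \<subseteq> l2" "finite E" "orthonormal E"
  shows "\<exists>E'. finite E' \<and> orthonormal E' \<and> E \<subseteq> E' \<and> V.span E' = V.span (E \<union> B)"
  using assms
proof (induction B rule: finite_induct)
  case empty then show ?case by auto
next
  case (insert b B)
  have "B \<subseteq> l2" using insert.prems by blast
  then obtain E1 where E1: "finite E1" "orthonormal E1" "E \<subseteq> E1" "V.span E1 = V.span (E \<union> B)"
    using insert.IH insert.prems by blast
  have E1l2: "\<And>v. v \<in> E1 \<Longrightarrow> v \<in> l2" using E1 by (auto simp: orthonormal_def)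
  have b: "b \<in> l2" using insert by auto
  have sp: "V.span (E \<union> insert b B) = V.span (insert b E1)"
    using span_insert_cong[OF E1(4)[symmetric]] by simp
  show ?case
  proof (cases "b \<in> V.span E1")
    case True
    then have "V.span (insert b E1) = V.span E1" by (rule V.span_redundant)
    then show ?thesis using E1 sp by auto
  next
    case False
    define p where "p = (\<Sum>e\<in>E1. sc (ip b e) e)"
    have pspan: "p \<in> V.span E1" unfolding p_def
      by (intro V.span_sum V.span_scale V.span_base)
    have pl2: "p \<in> l2" unfolding p_def using E1l2 by (auto intro!: l2_sum)
    define b' where "b' = b - p"
    have b'l2: "b' \<in> l2" unfolding b'_def using b pl2 by simp
    have b'nz: "b' \<noteq> 0"
    proof
      assume "b' = 0" then have "b = p" unfolding b'_def by simp
      then show False using False pspan by simp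
    qed
    have orth: "ip b' f = 0" if f: "f \<in> E1" for f
    proof -
      have "ip p f = ip b f" unfolding p_def
        using E1 E1l2 f b by (simp add: ip_lincomb_left orth_sum_ip)
      then show ?thesis unfolding b'_def using b pl2 E1l2 f by (simp add: ip_diff_left)
    qed
    define nb where "nb = nrm2 b'"
    have nb: "nb > 0" using nrm2_nonneg[OF b'l2] nrm2_zero[OF b'l2] b'nz unfolding nb_def by force
    define e' where "e' = sc (complex_of_real (1 / sqrt nb)) b'"
    have e'l2: "e' \<in> l2" unfolding e'_def using b'l2 by simp
    have e'e': "ip e' e' = 1"
    proof -
      have "nrm2 e' = (1 / sqrt nb)\<^sup>2 * nb" unfolding e'_def nb_def using b'l2
        by (simp add: nrm2_sc norm_divide nrm2_nonneg)
      also have "\<dots> = 1" using nb by (simp add: power_divide)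
      finally show ?thesis using e'l2 by (simp add: ip_self)
    qed
    have orth1: "ip e' f = 0" if f: "f \<in> E1" for f
      unfolding e'_def using orth[OF f] b'l2 E1l2[OF f] by (simp add: ip_sc_left)
    have orth2: "ip f e' = 0" if f: "f \<in> E1" for f
      using orth1[OF f] ip_cnj[OF e'l2 E1l2[OF f]] by simp
    have e'notin: "e' \<notin> E1" using orth1 e'e' by force
    have on: "orthonormal (insert e' E1)"
      using E1(2) e'l2 e'e' orth1 orth2 unfolding orthonormal_def by auto
    have "V.span (insert e' E1) = V.span (insert b E1)"
    proof (unfold V.span_eq, intro conjI)
      have "e' \<in> V.span (insert b E1)"
        unfolding e'_def b'_def
        using V.span_mono[of E1 "insert b E1"] pspan
        by (intro V.span_scale V.span_diff) (auto intro: V.span_base)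
      moreover have "E1 \<subseteq> V.span (insert b E1)" by (meson V.span_superset insert_subset subset_insertI2 subset_refl V.span_mono order_trans)
      ultimately show "insert e' E1 \<subseteq> V.span (insert b E1)" by auto
    next
      have "b = sc (complex_of_real (sqrt nb)) e' + p"
        unfolding e'_def b'_def using nb by (simp add: fun_eq_iff sc_apply)
      moreover have "sc (complex_of_real (sqrt nb)) e' + p \<in> V.span (insert e' E1)"
        using V.span_mono[of E1 "insert e' E1"] pspan
        by (intro V.span_add V.span_scale) (auto intro: V.span_base)
      moreover have "E1 \<subseteq> V.span (insert e' E1)" by (meson V.span_superset insert_subset subset_insertI2 subset_refl V.span_mono order_trans)
      ultimately show "insert b E1 \<subseteq> V.span (insert e' E1)" by auto
    qed
    then show ?thesis using E1 on sp by (intro exI[of _ "insert e' E1"]) auto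
  qed
qed


lemma bop_l2: "bounded_op T \<Longrightarrow> x \<in> l2 \<Longrightarrow> T x \<in> l2" by (simp add: bounded_op_def)
lemma bop_out: "bounded_op T \<Longrightarrow> x \<notin> l2 \<Longrightarrow> T x = 0" by (simp add: bounded_op_def zero_fun_def)

lemma bop_lin: "bounded_op T \<Longrightarrow> x \<in> l2 \<Longrightarrow> y \<in> l2 \<Longrightarrow> T (sc a x + sc b y) = sc a (T x) + sc b (T y)"
  unfolding bounded_op_def by (auto simp: sc_def plus_fun_def)

lemma bop_add: "bounded_op T \<Longrightarrow> x \<in> l2 \<Longrightarrow> y \<in> l2 \<Longrightarrow> T (x + y) = T x + T y"
  using bop_lin[of T x y 1 1] by (simp add: sc_def)

lemma bop_sc: "bounded_op T \<Longrightarrow> x \<in> l2 \<Longrightarrow> T (sc a x) = sc a (T x)"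
  using bop_lin[of T x x a 0] by (simp add: sc_def zero_fun_def[symmetric])

lemma bop_zero: "bounded_op T \<Longrightarrow> T 0 = 0"
  using bop_sc[of T 0 0] by (simp add: sc_def zero_fun_def)

lemma bop_diff: "bounded_op T \<Longrightarrow> x \<in> l2 \<Longrightarrow> y \<in> l2 \<Longrightarrow> T (x - y) = T x - T y"
proof -
  assume a: "bounded_op T" "x \<in> l2" "y \<in> l2"
  have e: "x - y = sc 1 x + sc (-1) y" by (simp add: fun_eq_iff sc_def)
  have "T (x - y) = sc 1 (T x) + sc (-1) (T y)" unfolding e by (rule bop_lin[OF a])
  then show ?thesis by (simp add: fun_eq_iff sc_def)
qed

lemma bop_sum: "bounded_op T \<Longrightarrow> (\<And>i. i \<in> A \<Longrightarrow> f i \<in> l2) \<Longrightarrow> T (sum f A) = (\<Sum>i\<in>A. T (f i))"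
  by (induction A rule: infinite_finite_induct) (auto simp: bop_zero bop_add l2_sum)

lemma bop_subspace: "bounded_op T \<Longrightarrow> V.subspace (T ` l2)"
  unfolding V.subspace_def
proof (intro conjI ballI allI)
  assume T: "bounded_op T"
  show "0 \<in> T ` l2" using bop_zero[OF T] by (metis image_eqI l2_zero)
  fix x y assume "x \<in> T ` l2" "y \<in> T ` l2"
  then obtain x' y' where "x' \<in> l2" "y' \<in> l2" "x = T x'" "y = T y'" by auto
  then show "x + y \<in> T ` l2" using bop_add[OF T] by (metis image_eqI l2_add)
next
  fix c x assume T: "bounded_op T" and "x \<in> T ` l2"
  then obtain x' where "x' \<in> l2" "x = T x'" by auto
  then show "sc c x \<in> T ` l2" using bop_sc[OF T] by (metis image_eqI l2_sc)
qed

definition lc :: "real \<Rightarrow> op \<Rightarrow> real \<Rightarrow> op \<Rightarrow> op" where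
  "lc a S b T = op_add (op_scale a S) (op_scale b T)"

lemma lc_apply: "lc a S b T x = sc (complex_of_real a) (S x) + sc (complex_of_real b) (T x)"
  by (simp add: lc_def op_add_def op_scale_def sc_def fun_eq_iff)

lemma bounded_lc:
  assumes S: "bounded_op S" and T: "bounded_op T"
  shows "bounded_op (lc a S b T)"
proof -
  obtain C1 where C1: "\<forall>x\<in>l2. l2norm (S x) \<le> C1 * l2norm x" using S by (auto simp: bounded_op_def)
  obtain C2 where C2: "\<forall>x\<in>l2. l2norm (T x) \<le> C2 * l2norm x" using T by (auto simp: bounded_op_def)
  have l2: "\<forall>x\<in>l2. lc a S b T x \<in> l2" using S T by (simp add: lc_apply bop_l2)
  have out: "\<forall>x. x \<notin> l2 \<longrightarrow> lc a S b T x = (\<lambda>n. 0)"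
    using S T by (simp add: lc_apply bop_out sc_def zero_fun_def)
  have lin: "lc a S b T (\<lambda>n. \<alpha> * x n + \<beta> * y n) = (\<lambda>n. \<alpha> * lc a S b T x n + \<beta> * lc a S b T y n)"
    if "x \<in> l2" "y \<in> l2" for x y \<alpha> \<beta>
  proof -
    have e: "(\<lambda>n. \<alpha> * x n + \<beta> * y n) = sc \<alpha> x + sc \<beta> y" by (simp add: fun_eq_iff sc_def)
    show ?thesis unfolding e lc_apply using that bop_lin[OF S] bop_lin[OF T]
      by (simp add: fun_eq_iff sc_def algebra_simps)
  qed
  have bnd: "l2norm (lc a S b T x) \<le> (\<bar>a\<bar> * C1 + \<bar>b\<bar> * C2) * l2norm x" if x: "x \<in> l2" for x
  proof -
    have "l2norm (lc a S b T x) \<le> l2norm (sc (complex_of_real a) (S x)) + l2norm (sc (complex_of_real b) (T x))"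
      unfolding lc_apply using x S T by (intro l2norm_triangle) (auto simp: bop_l2)
    also have "\<dots> = \<bar>a\<bar> * l2norm (S x) + \<bar>b\<bar> * l2norm (T x)"
      using x S T by (simp add: l2norm_sc bop_l2)
    also have "\<dots> \<le> \<bar>a\<bar> * (C1 * l2norm x) + \<bar>b\<bar> * (C2 * l2norm x)"
      using C1 C2 x by (intro add_mono mult_left_mono) auto
    finally show ?thesis by (simp add: algebra_simps)
  qed
  show ?thesis unfolding bounded_op_def using l2 out lin bnd by blast
qed

lemma selfadjoint_lc:
  assumes S: "selfadjoint_op S" and T: "selfadjoint_op T"
  shows "selfadjoint_op (lc a S b T)"
proof -
  have bS: "bounded_op S" and bT: "bounded_op T" using S T by (auto simp: selfadjoint_op_def)
  have "ip (lc a S b T x) y = ip x (lc a S b T y)" if "x \<in> l2" "y \<in> l2" for x y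
  proof -
    have "ip (lc a S b T x) y = of_real a * ip (S x) y + of_real b * ip (T x) y"
      unfolding lc_apply using that bS bT by (simp add: ip_add_left ip_sc_left bop_l2)
    also have "\<dots> = of_real a * ip x (S y) + of_real b * ip x (T y)"
      using S T that by (simp add: selfadjoint_op_def)
    also have "\<dots> = ip x (lc a S b T y)"
      unfolding lc_apply using that bS bT by (simp add: ip_add_right ip_sc_right bop_l2)
    finally show ?thesis .
  qed
  then show ?thesis using bounded_lc[OF bS bT] by (simp add: selfadjoint_op_def)
qed

lemma finite_rank_span: "finite_rank T \<Longrightarrow> \<exists>B. finite B \<and> B \<subseteq> l2 \<and> T ` l2 = V.span B"
proof -
  assume "finite_rank T"
  then obtain B where B: "B \<subseteq> l2" "clin_indep B" "T ` l2 = cspan B"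
    unfolding finite_rank_def has_rank_def by auto
  then have "finite B" by (simp add: clin_indep_iff)
  then show ?thesis using B by (intro exI[of _ B]) (simp add: cspan_eq)
qed

lemma finite_rank_from_span:
  assumes T: "bounded_op T" and B: "finite B" "T ` l2 \<subseteq> V.span B"
  shows "finite_rank T"
proof -
  obtain C where C: "C \<subseteq> T ` l2" "V.independent C" "T ` l2 \<subseteq> V.span C"
    using V.basis_exists by metis
  have fC: "finite C" using V.independent_span_bound[OF B(1) C(2)] C(1) B(2) by auto
  have "V.span C = T ` l2"
    using V.span_minimal[OF C(1) bop_subspace[OF T]] C(3) by auto
  moreover have "C \<subseteq> l2" using C(1) bop_l2[OF T] by auto
  ultimately show ?thesis unfolding finite_rank_def has_rank_def
    using fC C(2) by (auto simp: cspan_eq clin_indep_iff)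
qed

lemma finite_rank_lc:
  assumes S: "bounded_op S" "finite_rank S" and T: "bounded_op T" "finite_rank T"
  shows "finite_rank (lc a S b T)"
proof -
  obtain BS where BS: "finite BS" "S ` l2 = V.span BS" using finite_rank_span[OF S(2)] by auto
  obtain BT where BT: "finite BT" "T ` l2 = V.span BT" using finite_rank_span[OF T(2)] by auto
  have "lc a S b T ` l2 \<subseteq> V.span (BS \<union> BT)"
  proof
    fix y assume "y \<in> lc a S b T ` l2"
    then obtain x where x: "x \<in> l2" "y = lc a S b T x" by auto
    have "S x \<in> V.span (BS \<union> BT)" using BS x V.span_mono[of BS "BS \<union> BT"] by auto
    moreover have "T x \<in> V.span (BS \<union> BT)" using BT x V.span_mono[of BT "BS \<union> BT"] by auto
    ultimately show "y \<in> V.span (BS \<union> BT)" unfolding x lc_apply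
      by (intro V.span_add V.span_scale)
  qed
  then show ?thesis using BS BT by (intro finite_rank_from_span[OF bounded_lc[OF S(1) T(1)], of "BS \<union> BT"]) auto
qed

lemma Fsa_lc: "S \<in> Fsa \<Longrightarrow> T \<in> Fsa \<Longrightarrow> lc a S b T \<in> Fsa"
proof -
  assume "S \<in> Fsa" "T \<in> Fsa"
  then have S: "selfadjoint_op S" "finite_rank S" "bounded_op S" and T: "selfadjoint_op T" "finite_rank T" "bounded_op T"
    by (auto simp: Fsa_def selfadjoint_op_def)
  show ?thesis unfolding Fsa_def
    using selfadjoint_lc[OF S(1) T(1)] finite_rank_lc[OF S(3,2) T(3,2)] by blast
qed


definition projF :: "vec set \<Rightarrow> op" where
  "projF F = (\<lambda>x. if x \<in> l2 then (\<Sum>f\<in>F. sc (ip x f) f) else 0)"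

lemma projF_in: "x \<in> l2 \<Longrightarrow> projF F x = (\<Sum>f\<in>F. sc (ip x f) f)"
  by (simp add: projF_def)

lemma projF_out: "x \<notin> l2 \<Longrightarrow> projF F x = 0"
  by (simp add: projF_def)

lemma projF_l2: "F \<subseteq> l2 \<Longrightarrow> projF F x \<in> l2"
  by (auto simp: projF_def intro!: l2_sum)

lemma bounded_projF:
  assumes F: "F \<subseteq> l2"
  shows "bounded_op (projF F)"
proof -
  have lin: "projF F (\<lambda>n. a * x n + b * y n) = (\<lambda>n. a * projF F x n + b * projF F y n)"
    if x: "x \<in> l2" and y: "y \<in> l2" for x y a b
  proof -
    have e: "(\<lambda>n. a * x n + b * y n) = sc a x + sc b y" by (simp add: fun_eq_iff sc_def)
    have "\<And>f. f \<in> F \<Longrightarrow> ip (sc a x + sc b y) f = a * ip x f + b * ip y f"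
      using F x y by (auto simp: ip_add_left ip_sc_left)
    then have "projF F (\<lambda>n. a * x n + b * y n) = (\<Sum>f\<in>F. sc (a * ip x f + b * ip y f) f)"
      unfolding e using x y by (simp add: projF_in)
    also have "\<dots> = (\<lambda>n. a * projF F x n + b * projF F y n)"
      using x y by (simp add: projF_in sum_sc_apply fun_eq_iff sum_distrib_left sum.distrib algebra_simps)
    finally show ?thesis .
  qed
  have bnd: "l2norm (projF F x) \<le> (\<Sum>f\<in>F. (l2norm f)\<^sup>2) * l2norm x" if x: "x \<in> l2" for x
  proof -
    have "l2norm (projF F x) \<le> (\<Sum>f\<in>F. l2norm (sc (ip x f) f))"
      unfolding projF_in[OF x] using F x by (intro l2norm_sum) auto
    also have "\<dots> = (\<Sum>f\<in>F. cmod (ip x f) * l2norm f)"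
      using F by (intro sum.cong) (auto simp: l2norm_sc)
    also have "\<dots> \<le> (\<Sum>f\<in>F. (l2norm x * l2norm f) * l2norm f)"
      using F x cs_norm by (intro sum_mono mult_right_mono) (auto simp: l2norm_nonneg)
    also have "\<dots> = (\<Sum>f\<in>F. (l2norm f)\<^sup>2) * l2norm x"
      by (simp add: sum_distrib_left power2_eq_square mult_ac)
    finally show ?thesis .
  qed
  have "\<exists>C. \<forall>x\<in>l2. l2norm (projF F x) \<le> C * l2norm x" using bnd by blast
  then show ?thesis unfolding bounded_op_def
    using projF_l2[OF F] lin by (auto simp: projF_out zero_fun_def)
qed

lemma selfadjoint_projF:
  assumes F: "F \<subseteq> l2"
  shows "selfadjoint_op (projF F)"
proof -
  have "ip (projF F x) y = ip x (projF F y)" if x: "x \<in> l2" and y: "y \<in> l2" for x y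
  proof -
    have "ip (projF F x) y = (\<Sum>f\<in>F. ip x f * ip f y)"
      unfolding projF_in[OF x] using F y by (simp add: ip_lincomb_left subset_iff)
    also have "\<dots> = (\<Sum>f\<in>F. cnj (ip y f) * ip x f)"
      using F x y by (intro sum.cong) (auto simp: ip_cnj[of y] mult.commute)
    also have "\<dots> = ip x (projF F y)"
      unfolding projF_in[OF y] using F x by (simp add: ip_sum_right ip_sc_right subset_iff)
    finally show ?thesis .
  qed
  then show ?thesis using bounded_projF[OF F] by (simp add: selfadjoint_op_def)
qed

lemma projF_span: "F \<subseteq> l2 \<Longrightarrow> projF F x \<in> V.span F"
proof -
  assume F: "F \<subseteq> l2"
  show ?thesis
  proof (cases "x \<in> l2")
    case True
    then show ?thesis unfolding projF_in[OF True]
      by (intro V.span_sum V.span_scale) (auto intro: V.span_base)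
  qed (simp add: projF_out V.span_zero)
qed

lemma projF_fix:
  assumes "orthonormal F" "finite F" "y \<in> V.span F"
  shows "projF F y = y"
proof -
  have "F \<subseteq> l2" using assms by (simp add: orthonormal_def)
  then have "y \<in> l2" using span_l2 assms by auto
  then show ?thesis using orth_expand[OF assms] by (simp add: projF_in)
qed

lemma projF_range:
  assumes "orthonormal F" "finite F"
  shows "projF F ` l2 = V.span F"
proof
  have F: "F \<subseteq> l2" using assms by (simp add: orthonormal_def)
  show "projF F ` l2 \<subseteq> V.span F" using projF_span[OF F] by auto
  show "V.span F \<subseteq> projF F ` l2"
  proof
    fix y assume y: "y \<in> V.span F"
    then have "y \<in> l2" using span_l2[OF F] by auto
    then show "y \<in> projF F ` l2" using projF_fix[OF assms y] by (metis image_eqI)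
  qed
qed

lemma projF_idem:
  assumes "orthonormal F" "finite F"
  shows "projF F \<circ> projF F = projF F"
proof
  fix x
  have F: "F \<subseteq> l2" using assms by (simp add: orthonormal_def)
  show "(projF F \<circ> projF F) x = projF F x"
    using projF_fix[OF assms projF_span[OF F]] by simp
qed

lemma Proj_projF:
  assumes "orthonormal F" "finite F"
  shows "projF F \<in> Proj (card F)"
proof -
  have F: "F \<subseteq> l2" using assms by (simp add: orthonormal_def)
  have "has_rank (projF F) (card F)"
    unfolding has_rank_def using F assms orth_independent[OF assms] projF_range[OF assms]
    by (intro exI[of _ F]) (simp add: clin_indep_iff cspan_eq)
  then show ?thesis unfolding Proj_def
    using selfadjoint_projF[OF F] projF_idem[OF assms] by simp
qed

lemma Fsa_projF:
  assumes F: "finite F" "F \<subseteq> l2"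
  shows "projF F \<in> Fsa"
proof -
  have "finite_rank (projF F)"
    using F projF_span[OF F(2)] by (intro finite_rank_from_span[OF bounded_projF[OF F(2)], of F]) auto
  then show ?thesis using selfadjoint_projF[OF F(2)] by (simp add: Fsa_def)
qed

lemma Proj_Fsa: "Proj k \<subseteq> Fsa"
  by (auto simp: Proj_def Fsa_def finite_rank_def)

definition unitv :: "vec \<Rightarrow> bool" where "unitv x \<longleftrightarrow> x \<in> l2 \<and> ip x x = 1"

lemma orthonormal_single: "unitv t \<Longrightarrow> orthonormal {t}"
  by (simp add: orthonormal_def unitv_def)

lemma projF_single: "x \<in> l2 \<Longrightarrow> projF {t} x = sc (ip x t) t"
  by (simp add: projF_in)

lemma Proj1_single: "unitv t \<Longrightarrow> projF {t} \<in> Proj 1"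
  using Proj_projF[OF orthonormal_single] by fastforce

lemma Proj1_structure:
  assumes P: "P \<in> Proj 1"
  shows "\<exists>r. unitv r \<and> P = projF {r}"
proof -
  have sa: "selfadjoint_op P" and idem: "P \<circ> P = P" and rk: "has_rank P 1"
    using P by (auto simp: Proj_def)
  have bP: "bounded_op P" using sa by (simp add: selfadjoint_op_def)
  obtain B where B: "B \<subseteq> l2" "clin_indep B" "card B = 1" "P ` l2 = cspan B"
    using rk unfolding has_rank_def by auto
  obtain b where b: "B = {b}" using B(3) card_1_singletonE by blast
  have bl2: "b \<in> l2" using B b by auto
  have indep: "V.independent {b}" using B(2) b by (simp add: clin_indep_iff)
  then have bnz: "b \<noteq> 0" by simp
  have rangeP: "P ` l2 = V.span {b}" using B b by (simp add: cspan_eq)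
  define nb where "nb = nrm2 b"
  have nb: "nb > 0" using nrm2_nonneg[OF bl2] nrm2_zero[OF bl2] bnz unfolding nb_def by force
  define r where "r = sc (complex_of_real (1 / sqrt nb)) b"
  have rl2: "r \<in> l2" unfolding r_def using bl2 by simp
  have rr: "ip r r = 1"
  proof -
    have "nrm2 r = (1 / sqrt nb)\<^sup>2 * nb" unfolding r_def nb_def using bl2
      by (simp add: nrm2_sc norm_divide nrm2_nonneg)
    also have "\<dots> = 1" using nb by (simp add: power_divide)
    finally show ?thesis using rl2 by (simp add: ip_self)
  qed
  have rspan: "r \<in> P ` l2" unfolding rangeP r_def by (intro V.span_scale V.span_base) simp
  then obtain y where y: "y \<in> l2" "r = P y" by auto
  have Pr: "P r = r" using idem y by (metis comp_apply)
  have "P x = sc (ip x r) r" if x: "x \<in> l2" for x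
  proof -
    have "P x \<in> V.span {b}" using rangeP x by auto
    then obtain c where c: "P x = sc c b" by (auto simp: V.span_singleton)
    have bsc: "b = sc (complex_of_real (sqrt nb)) r" unfolding r_def using nb by (simp add: fun_eq_iff sc_def)
    have c': "P x = sc (c * complex_of_real (sqrt nb)) r" unfolding c bsc by (simp add: fun_eq_iff sc_def)
    have "ip (P x) r = ip x (P r)" using sa x rl2 by (simp add: selfadjoint_op_def)
    then have "ip (P x) r = ip x r" using Pr by simp
    moreover have "ip (P x) r = c * complex_of_real (sqrt nb)" unfolding c' using rl2 rr by (simp add: ip_sc_left)
    ultimately show ?thesis using c' by simp
  qed
  then have "P = projF {r}"
  proof -
    assume h: "\<And>x. x \<in> l2 \<Longrightarrow> P x = sc (ip x r) r"
    show "P = projF {r}"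
    proof
      fix x show "P x = projF {r} x"
        by (cases "x \<in> l2") (simp_all add: h projF_single projF_out bop_out[OF bP])
    qed
  qed
  then show ?thesis using rl2 rr by (auto simp: unitv_def)
qed


inductive_set rcomb :: "op set \<Rightarrow> op set" for S where
  rz: "0 \<in> rcomb S"
| rs: "Q \<in> S \<Longrightarrow> T \<in> rcomb S \<Longrightarrow> lc a Q 1 T \<in> rcomb S"

lemma lc_fun: "lc a X b Y = (\<lambda>x n. complex_of_real a * X x n + complex_of_real b * Y x n)"
  by (simp add: lc_def op_add_def op_scale_def)

lemma rcomb_base: "Q \<in> S \<Longrightarrow> Q \<in> rcomb S"
proof -
  assume "Q \<in> S"
  then have "lc 1 Q 1 0 \<in> rcomb S" by (intro rs rz)
  moreover have "lc 1 Q 1 0 = Q" by (simp add: lc_fun)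
  ultimately show ?thesis by simp
qed

lemma rcomb_scale: "Y \<in> rcomb S \<Longrightarrow> op_scale b Y \<in> rcomb S"
proof (induction rule: rcomb.induct)
  case rz
  have e: "op_scale b 0 = 0" by (simp add: op_scale_def fun_eq_iff)
  show ?case unfolding e by (rule rcomb.rz)
next
  case (rs Q T a)
  have "op_scale b (lc a Q 1 T) = lc (b * a) Q 1 (op_scale b T)"
    by (simp add: op_scale_def lc_fun algebra_simps)
  then show ?case using rs by (simp add: rcomb.rs)
qed

lemma rcomb_lc: "X \<in> rcomb S \<Longrightarrow> Y \<in> rcomb S \<Longrightarrow> lc a X b Y \<in> rcomb S"
proof (induction arbitrary: a rule: rcomb.induct)
  case rz
  have e: "lc a 0 b Y = op_scale b Y" by (simp add: op_scale_def lc_fun)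
  show ?case unfolding e using rcomb_scale[OF rz.prems] .
next
  case (rs Q T c)
  have "lc a (lc c Q 1 T) b Y = lc (a * c) Q 1 (lc a T b Y)"
    by (simp add: lc_fun algebra_simps)
  then show ?case using rs by (simp add: rcomb.rs)
qed

lemma rcomb_add: "X \<in> rcomb S \<Longrightarrow> Y \<in> rcomb S \<Longrightarrow> X + Y \<in> rcomb S"
proof -
  assume "X \<in> rcomb S" "Y \<in> rcomb S"
  then have "lc 1 X 1 Y \<in> rcomb S" by (rule rcomb_lc)
  moreover have "lc 1 X 1 Y = X + Y" by (simp add: lc_fun fun_eq_iff)
  ultimately show ?thesis by simp
qed

lemma rcomb_sum: "(\<And>i. i \<in> A \<Longrightarrow> f i \<in> rcomb S) \<Longrightarrow> sum f A \<in> rcomb S"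
  by (induction A rule: infinite_finite_induct) (auto intro: rcomb_add rcomb.rz)

lemma rcomb_mono: "S \<subseteq> rcomb S' \<Longrightarrow> X \<in> rcomb S \<Longrightarrow> X \<in> rcomb S'"
proof -
  assume sub: "S \<subseteq> rcomb S'"
  show "X \<in> rcomb S \<Longrightarrow> X \<in> rcomb S'"
  proof (induction rule: rcomb.induct)
    case rz then show ?case by (rule rcomb.rz)
  next
    case (rs Q T a) then show ?case using sub by (intro rcomb_lc) auto
  qed
qed

lemma zero_Fsa: "(0::op) \<in> Fsa"
proof -
  have "projF {} = 0" by (simp add: projF_def fun_eq_iff)
  then show ?thesis using Fsa_projF[of "{}"] by simp
qed

lemma rcomb_Fsa: "S \<subseteq> Fsa \<Longrightarrow> X \<in> rcomb S \<Longrightarrow> X \<in> Fsa"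
proof -
  assume sub: "S \<subseteq> Fsa"
  show "X \<in> rcomb S \<Longrightarrow> X \<in> Fsa"
  proof (induction rule: rcomb.induct)
    case rz then show ?case by (rule zero_Fsa)
  next
    case (rs Q T a) then show ?case using sub by (intro Fsa_lc) auto
  qed
qed

lemma projF_single_rcomb:
  assumes z: "z \<in> l2"
  shows "projF {z} \<in> rcomb (Proj 1)"
proof (cases "z = 0")
  case True
  have "projF {z} = 0" using True by (simp add: projF_def fun_eq_iff sc_def)
  then show ?thesis by (simp add: rcomb.rz)
next
  case False
  define n where "n = nrm2 z"
  have n: "n > 0" using nrm2_nonneg[OF z] nrm2_zero[OF z] False unfolding n_def by force
  define u where "u = sc (complex_of_real (1 / sqrt n)) z"
  have ul2: "u \<in> l2" unfolding u_def using z by simp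
  have uu: "ip u u = 1"
  proof -
    have "nrm2 u = (1 / sqrt n)\<^sup>2 * n" unfolding u_def n_def using z
      by (simp add: nrm2_sc norm_divide nrm2_nonneg)
    also have "\<dots> = 1" using n by (simp add: power_divide)
    finally show ?thesis using ul2 by (simp add: ip_self)
  qed
  have zu: "z = sc (complex_of_real (sqrt n)) u" unfolding u_def using n by (simp add: fun_eq_iff sc_def)
  have "projF {z} = lc n (projF {u}) 1 0"
  proof
    fix x show "projF {z} x = lc n (projF {u}) 1 0 x"
    proof (cases "x \<in> l2")
      case True
      have "ip x z = complex_of_real (sqrt n) * ip x u" unfolding zu using True ul2 by (simp add: ip_sc_right)
      moreover have "complex_of_real (sqrt n) * complex_of_real (sqrt n) = complex_of_real n"
        using n by (simp flip: of_real_mult)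
      ultimately show ?thesis using True n by (simp add: projF_single lc_fun fun_eq_iff sc_def zu)
    qed (simp add: projF_out lc_fun fun_eq_iff)
  qed
  moreover have "projF {u} \<in> Proj 1" using ul2 uu by (intro Proj1_single) (simp add: unitv_def)
  ultimately show ?thesis by (simp add: rcomb.rs rcomb.rz)
qed


lemma Fsa_decomp:
  assumes T: "T \<in> Fsa"
  shows "T \<in> rcomb (Proj 1)"
proof -
  have sa: "selfadjoint_op T" and fr: "finite_rank T" using T by (auto simp: Fsa_def)
  have bT: "bounded_op T" using sa by (simp add: selfadjoint_op_def)
  have saip: "\<And>x y. x \<in> l2 \<Longrightarrow> y \<in> l2 \<Longrightarrow> ip (T x) y = ip x (T y)"
    using sa by (simp add: selfadjoint_op_def)
  obtain B where B: "finite B" "B \<subseteq> l2" "T ` l2 = V.span B" using finite_rank_span[OF fr] by auto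
  obtain E where E: "finite E" "orthonormal E" "V.span E = V.span B"
    using gram_schmidt[OF B(1,2), of "{}"] by (auto simp: orthonormal_def)
  have El2: "\<And>e. e \<in> E \<Longrightarrow> e \<in> l2" using E by (auto simp: orthonormal_def)
  have TEl2: "\<And>e. e \<in> E \<Longrightarrow> T e \<in> l2" using El2 bop_l2[OF bT] by auto
  have Tspan: "\<And>x. x \<in> l2 \<Longrightarrow> T x \<in> V.span E" using B E by auto
  have exp1: "T x = (\<Sum>e\<in>E. sc (ip x (T e)) e)" if x: "x \<in> l2" for x
  proof -
    have "T x = (\<Sum>e\<in>E. sc (ip (T x) e) e)" using orth_expand[OF E(2,1) Tspan[OF x]] .
    also have "\<dots> = (\<Sum>e\<in>E. sc (ip x (T e)) e)" using saip x El2 by (intro sum.cong) auto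
    finally show ?thesis .
  qed
  have exp2: "T x = (\<Sum>e\<in>E. sc (ip x e) (T e))" if x: "x \<in> l2" for x
  proof -
    define A where "A = T x"
    define Bv where "Bv = (\<Sum>e\<in>E. sc (ip x e) (T e))"
    have Al2: "A \<in> l2" unfolding A_def using bop_l2[OF bT x] .
    have Bl2: "Bv \<in> l2" unfolding Bv_def using TEl2 by (auto intro!: l2_sum)
    have eq: "ip A y = ip Bv y" if y: "y \<in> l2" for y
    proof -
      have Tyl2: "T y \<in> l2" using bop_l2[OF bT y] .
      have "ip A y = ip x (T y)" unfolding A_def using saip x y by simp
      also have "\<dots> = ip x (\<Sum>e\<in>E. sc (ip (T y) e) e)" using orth_expand[OF E(2,1) Tspan[OF y]] by simp
      also have "\<dots> = (\<Sum>e\<in>E. cnj (ip (T y) e) * ip x e)" using x El2 by (simp add: ip_sum_right ip_sc_right)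
      also have "\<dots> = (\<Sum>e\<in>E. ip x e * ip (T e) y)"
      proof (rule sum.cong[OF refl])
        fix e assume e: "e \<in> E"
        have "cnj (ip (T y) e) = ip e (T y)" using ip_cnj[OF El2[OF e] Tyl2] by simp
        moreover have "ip (T e) y = ip e (T y)" using saip[OF El2[OF e] y] .
        ultimately show "cnj (ip (T y) e) * ip x e = ip x e * ip (T e) y" by simp
      qed
      also have "\<dots> = ip Bv y" unfolding Bv_def using y TEl2 by (simp add: ip_sum_left ip_sc_left)
      finally show ?thesis .
    qed
    have "ip (A - Bv) (A - Bv) = 0" using eq[of "A - Bv"] Al2 Bl2 by (simp add: ip_diff_left)
    then have "A - Bv = 0" using ip_self_zero[of "A - Bv"] Al2 Bl2 by simp
    then show ?thesis unfolding A_def Bv_def by simp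
  qed
  define D where "D = (\<Sum>e\<in>E. lc (1/4) (projF {e + T e}) (-1/4) (projF {e - T e}))"
  have "T = D"
  proof
    fix x show "T x = D x"
    proof (cases "x \<in> l2")
      case False then show ?thesis
        unfolding D_def using bop_out[OF bT False] by (simp add: sum_apply lc_fun projF_out fun_eq_iff)
    next
      case True
      show ?thesis
      proof
        fix n
        have "D x n = (\<Sum>e\<in>E. (1/4) * (ip x (e + T e) * (e n + T e n)) - (1/4) * (ip x (e - T e) * (e n - T e n)))"
          unfolding D_def using True by (simp add: sum_apply lc_fun projF_single sc_def)
        also have "\<dots> = (\<Sum>e\<in>E. (1/2) * (ip x (T e) * e n) + (1/2) * (ip x e * T e n))"
          using True El2 TEl2 by (intro sum.cong) (auto simp: ip_add_right ip_diff_right algebra_simps)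
        also have "\<dots> = (1/2) * T x n + (1/2) * T x n"
          apply (subst (2) exp1[OF True]) apply (subst exp2[OF True])
          by (simp add: sum.distrib sum_distrib_left sum_apply sc_def)
        also have "\<dots> = T x n" by simp
        finally show "T x n = D x n" by simp
      qed
    qed
  qed
  moreover have "D \<in> rcomb (Proj 1)"
    unfolding D_def using El2 TEl2
    by (intro rcomb_sum rcomb_lc projF_single_rcomb) auto
  ultimately show ?thesis by simp
qed

lemma ip_basis: "ip (basis_vec i) (basis_vec j) = (if i = j then 1 else 0)"
proof -
  have "(\<lambda>n. basis_vec i n * cnj (basis_vec j n)) = (\<lambda>n. if n = i then (if i = j then 1 else 0) else 0)"
    by (auto simp: basis_vec_def fun_eq_iff)
  then show ?thesis unfolding l2inner_def using sums_single[of i "\<lambda>_. if i = j then 1 else (0::complex)"]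
    by (simp add: sums_iff)
qed

lemma orthonormal_basis: "orthonormal (basis_vec ` A)"
  unfolding orthonormal_def by (auto simp: ip_basis)

lemma inj_basis: "inj basis_vec"
proof (rule injI)
  fix i j assume "basis_vec i = basis_vec j"
  then have "basis_vec i i = basis_vec j i" by simp
  then show "i = j" by (auto simp: basis_vec_def split: if_splits)
qed

lemma orthonormal_subset: "orthonormal E \<Longrightarrow> F \<subseteq> E \<Longrightarrow> orthonormal F"
  unfolding orthonormal_def by blast

lemma exists_orth_compl:
  assumes z: "unitv z"
  shows "\<exists>F. finite F \<and> orthonormal (insert z F) \<and> z \<notin> F \<and> card F = k"
proof -
  let ?B = "basis_vec ` {..k}"
  have fB: "finite ?B" by simp
  have "inj_on basis_vec {..k}" using inj_basis inj_on_subset by blast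
  then have cB: "card ?B = Suc k" by (simp add: card_image)
  have Bl2: "?B \<subseteq> l2" by auto
  have fz: "finite {z}" by simp
  obtain E' where E': "finite E'" "orthonormal E'" "{z} \<subseteq> E'" "V.span E' = V.span ({z} \<union> ?B)"
    using gram_schmidt[OF fB Bl2 fz orthonormal_single[OF z]] by blast
  have "?B \<subseteq> V.span E'" using V.span_superset[of "{z} \<union> ?B"] E'(4) by auto
  then have "card ?B \<le> card E'"
    using V.independent_span_bound[OF E'(1) orth_independent[OF orthonormal_basis]] by auto
  then have "k \<le> card (E' - {z})" using cB E' by (simp add: card_Diff_singleton)
  then obtain F where F: "F \<subseteq> E' - {z}" "card F = k" "finite F" by (rule obtain_subset_with_card_n)
  have "insert z F \<subseteq> E'" using E'(3) F(1) by auto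
  then have "orthonormal (insert z F)" using E'(2) orthonormal_subset by blast
  then show ?thesis using F by auto
qed

lemma Proj1_in_rcomb_k:
  assumes z: "unitv z" and k: "k \<ge> 1"
  shows "projF {z} \<in> rcomb (Proj k)"
proof -
  obtain F where F: "finite F" "orthonormal (insert z F)" "z \<notin> F" "card F = k"
    using exists_orth_compl[OF z] by blast
  have oF: "orthonormal F" by (rule orthonormal_subset[OF F(2)]) auto
  have Fl2: "\<And>f. f \<in> F \<Longrightarrow> f \<in> l2" using oF by (auto simp: orthonormal_def)
  define G where "G f = insert z (F - {f})" for f
  have oG: "orthonormal (G f)" for f by (rule orthonormal_subset[OF F(2)]) (auto simp: G_def)
  have cG: "card (G f) = k" if "f \<in> F" for f
  proof -
    have "card (F - {f}) = k - 1" using F that by (simp add: card_Diff_singleton)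
    moreover have "card F > 0" using F(1) that card_gt_0_iff by blast
    then have "k \<ge> 1" using F(4) by simp
    moreover have "z \<notin> F - {f}" "finite (F - {f})" using F by auto
    ultimately show ?thesis unfolding G_def by simp
  qed
  have fG: "finite (G f)" for f using F unfolding G_def by simp
  have PG: "projF (G f) \<in> Proj k" if "f \<in> F" for f using Proj_projF[OF oG fG, of f] cG[OF that] by simp
  have PF: "projF F \<in> Proj k" using Proj_projF[OF oF F(1)] F(4) by simp
  define D where "D = lc (1 / real k) (\<Sum>f\<in>F. projF (G f)) (- (real k - 1) / real k) (projF F)"
  have "(\<Sum>f\<in>F. projF (G f)) \<in> rcomb (Proj k)"
    using PG by (intro rcomb_sum rcomb_base)
  then have "D \<in> rcomb (Proj k)" unfolding D_def using rcomb_base[OF PF] by (rule rcomb_lc)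
  moreover have "D = projF {z}"
  proof
    fix x show "D x = projF {z} x"
    proof (cases "x \<in> l2")
      case False then show ?thesis
        by (simp add: D_def sum_apply lc_fun projF_out fun_eq_iff)
    next
      case True
      show ?thesis
      proof
        fix n
        define h where "h g = ip x g * g n" for g
        define S where "S = (\<Sum>g\<in>F. h g)"
        have Gx: "projF (G f) x n = ip x z * z n + (S - h f)" if f: "f \<in> F" for f
        proof -
          have "projF (G f) x n = ip x z * z n + (\<Sum>g\<in>F - {f}. h g)"
            using True F unfolding G_def h_def by (simp add: projF_in sum_apply sc_def)
          also have "(\<Sum>g\<in>F - {f}. h g) = S - h f" unfolding S_def using F(1) f by (simp add: sum_diff1)
          finally show ?thesis .
        qed
        have "(\<Sum>f\<in>F. projF (G f)) x n = (\<Sum>f\<in>F. ip x z * z n + (S - h f))"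
          using Gx by (simp add: sum_apply)
        also have "\<dots> = of_nat k * (ip x z * z n) + (of_nat k * S - S)"
          using F(4) by (simp add: sum.distrib sum_subtractf S_def)
        finally have s1: "(\<Sum>f\<in>F. projF (G f)) x n = of_nat k * (ip x z * z n) + (of_nat k * S - S)" .
        have s2: "projF F x n = S" using True unfolding S_def h_def by (simp add: projF_in sum_apply sc_def)
        have kk: "complex_of_real (real k) \<noteq> 0" using k by simp
        have "D x n = complex_of_real (1 / real k) * (of_nat k * (ip x z * z n) + (of_nat k * S - S))
                      + complex_of_real (- (real k - 1) / real k) * S"
          unfolding D_def lc_fun s1 s2 by simp
        also have "\<dots> = ip x z * z n"
        proof -
          have e1: "complex_of_real (1 / real k) = 1 / of_nat k" by simp
          have e2: "complex_of_real (- (real k - 1) / real k) = - (of_nat k - 1) / of_nat k" by simp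
          have kk': "(of_nat k :: complex) \<noteq> 0" using k by simp
          show ?thesis unfolding e1 e2 using kk' by (simp add: field_simps)
        qed
        also have "\<dots> = projF {z} x n" using True by (simp add: projF_single sc_def)
        finally show "D x n = projF {z} x n" .
      qed
    qed
  qed
  ultimately show ?thesis by simp
qed

lemma Fsa_eq_rcomb:
  assumes k: "k \<ge> 1"
  shows "Fsa = rcomb (Proj k)"
proof
  show "rcomb (Proj k) \<subseteq> Fsa" using rcomb_Fsa[OF Proj_Fsa] by auto
  have "Proj 1 \<subseteq> rcomb (Proj k)"
  proof
    fix P assume "P \<in> Proj 1"
    then obtain r where "unitv r" "P = projF {r}" using Proj1_structure by blast
    then show "P \<in> rcomb (Proj k)" using Proj1_in_rcomb_k k by simp
  qed
  then show "Fsa \<subseteq> rcomb (Proj k)" using Fsa_decomp rcomb_mono by blast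
qed


locale Lmap =
  fixes L :: "op \<Rightarrow> op" and k :: nat
  assumes linear: "\<forall>S\<in>Fsa. \<forall>T\<in>Fsa. \<forall>a b::real.
                   L (op_add (op_scale a S) (op_scale b T)) = op_add (op_scale a (L S)) (op_scale b (L T))"
    and k_pos: "k \<ge> 1"
    and proj: "L ` Proj k = Proj k"
begin

lemma Llc: "S \<in> Fsa \<Longrightarrow> T \<in> Fsa \<Longrightarrow> L (lc a S b T) = lc a (L S) b (L T)"
  using linear by (simp add: lc_def)

lemma L0: "L 0 = 0"
proof -
  have e: "lc 0 0 0 0 = (0::op)" by (simp add: lc_fun fun_eq_iff)
  have "L (lc 0 0 0 0) = lc 0 (L 0) 0 (L 0)" using Llc zero_Fsa by blast
  then show ?thesis unfolding e by (simp add: lc_fun fun_eq_iff zero_fun_def)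
qed

lemma L_rcomb: "S \<subseteq> Fsa \<Longrightarrow> X \<in> rcomb S \<Longrightarrow> L X \<in> rcomb (L ` S)"
proof -
  assume sub: "S \<subseteq> Fsa"
  show "X \<in> rcomb S \<Longrightarrow> L X \<in> rcomb (L ` S)"
  proof (induction rule: rcomb.induct)
    case rz show ?case unfolding L0 by (rule rcomb.rz)
  next
    case (rs Q T a)
    have "T \<in> Fsa" using rcomb_Fsa[OF sub rs(2)] .
    then have "L (lc a Q 1 T) = lc a (L Q) 1 (L T)" using sub rs(1) by (intro Llc) auto
    then show ?case using rs by (simp add: rcomb.rs)
  qed
qed

lemma L_rcomb_onto: "S \<subseteq> Fsa \<Longrightarrow> Y \<in> rcomb (L ` S) \<Longrightarrow> \<exists>X\<in>rcomb S. L X = Y"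
proof -
  assume sub: "S \<subseteq> Fsa"
  show "Y \<in> rcomb (L ` S) \<Longrightarrow> \<exists>X\<in>rcomb S. L X = Y"
  proof (induction rule: rcomb.induct)
    case rz then show ?case using L0 rcomb.rz by blast
  next
    case (rs Q T a)
    obtain Q' where Q': "Q' \<in> S" "Q = L Q'" using rs(1) by auto
    obtain X where X: "X \<in> rcomb S" "L X = T" using rs(3) by auto
    have "X \<in> Fsa" using rcomb_Fsa[OF sub X(1)] .
    then have "L (lc a Q' 1 X) = lc a Q 1 T" using sub Q' X by (subst Llc) auto
    moreover have "lc a Q' 1 X \<in> rcomb S" using Q' X by (intro rcomb.rs)
    ultimately show ?case by blast
  qed
qed

lemma L_image: "L ` Fsa = Fsa"
proof -
  have eq: "Fsa = rcomb (Proj k)" using Fsa_eq_rcomb[OF k_pos] .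
  have sub: "Proj k \<subseteq> Fsa" by (rule Proj_Fsa)
  show ?thesis
  proof
    show "L ` Fsa \<subseteq> Fsa"
    proof
      fix Y assume "Y \<in> L ` Fsa"
      then obtain X where "X \<in> rcomb (Proj k)" "Y = L X" using eq by auto
      then show "Y \<in> Fsa" using L_rcomb[OF sub] proj eq by auto
    qed
    show "Fsa \<subseteq> L ` Fsa"
    proof
      fix Y assume "Y \<in> Fsa"
      then have "Y \<in> rcomb (L ` Proj k)" using eq proj by simp
      then obtain X where "X \<in> rcomb (Proj k)" "L X = Y" using L_rcomb_onto[OF sub] by blast
      then show "Y \<in> L ` Fsa" using eq by auto
    qed
  qed
qed

lemma L_Fsa: "T \<in> Fsa \<Longrightarrow> L T \<in> Fsa" using L_image by auto

end


definition qf :: "op \<Rightarrow> vec \<Rightarrow> real" where "qf A r = Re (ip (A r) r)"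

lemma ip_self_unit: "unitv r \<Longrightarrow> ip r r = 1" by (simp add: unitv_def)
lemma unit_l2: "unitv r \<Longrightarrow> r \<in> l2" by (simp add: unitv_def)

lemma cmod_sq_mult_cnj: "(cmod c)\<^sup>2 = Re (c * cnj c)"
  by (simp add: complex_mult_cnj cmod_power2)

lemma qf_proj: "r \<in> l2 \<Longrightarrow> s \<in> l2 \<Longrightarrow> qf (projF {s}) r = (cmod (ip r s))\<^sup>2"
proof -
  assume r: "r \<in> l2" and s: "s \<in> l2"
  have "ip (projF {s} r) r = ip r s * ip s r" using r s by (simp add: projF_single ip_sc_left)
  also have "\<dots> = ip r s * cnj (ip r s)" using ip_cnj[OF r s] by simp
  finally show ?thesis unfolding qf_def by (simp add: cmod_sq_mult_cnj)
qed

lemma qf_lc: "bounded_op A \<Longrightarrow> bounded_op B \<Longrightarrow> r \<in> l2 \<Longrightarrow> qf (lc a A b B) r = a * qf A r + b * qf B r"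
  unfolding qf_def lc_apply by (simp add: ip_add_left ip_sc_left bop_l2)

lemma nrm2_unit: "unitv r \<Longrightarrow> nrm2 r = 1"
  using ip_self[of r] by (simp add: unitv_def)

lemma tp_le1: "unitv r \<Longrightarrow> unitv s \<Longrightarrow> (cmod (ip r s))\<^sup>2 \<le> 1"
  using cauchy_schwarz[of r s] nrm2_unit[of r] nrm2_unit[of s] by (simp add: unitv_def)

lemma tp_eq1_vec:
  assumes r: "unitv r" and s: "unitv s" and eq: "(cmod (ip s r))\<^sup>2 = 1"
  shows "s = sc (ip s r) r"
proof -
  have rl: "r \<in> l2" and sl: "s \<in> l2" using r s by (auto simp: unitv_def)
  define c where "c = ip s r"
  define w where "w = s - sc c r"
  have wl: "w \<in> l2" unfolding w_def using rl sl by simp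
  have "ip w w = ip s s - cnj c * ip s r - c * ip r s + c * cnj c * ip r r"
    unfolding w_def using rl sl
    by (simp add: ip_diff_left ip_diff_right ip_sc_left ip_sc_right algebra_simps)
  also have "\<dots> = 1 - c * cnj c"
    using r s ip_cnj[OF rl sl] by (simp add: unitv_def c_def)
  also have "c * cnj c = 1" using eq unfolding c_def
    by (simp add: complex_mult_cnj cmod_power2 complex_eq_iff)
  finally have "ip w w = 0" by simp
  then have "w = 0" using ip_self_zero[OF wl] by simp
  then show ?thesis unfolding w_def c_def by simp
qed

lemma tp_eq1:
  assumes r: "unitv r" and s: "unitv s" and eq: "(cmod (ip r s))\<^sup>2 = 1"
  shows "projF {s} = projF {r}"
proof -
  have rl: "r \<in> l2" and sl: "s \<in> l2" using r s by (auto simp: unitv_def)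
  have eq': "(cmod (ip s r))\<^sup>2 = 1" using eq ip_cnj[OF rl sl] by simp
  define c where "c = ip s r"
  have sv: "s = sc c r" using tp_eq1_vec[OF r s eq'] by (simp add: c_def)
  have cc: "c * cnj c = 1" using eq' unfolding c_def
    by (simp add: complex_mult_cnj cmod_power2 complex_eq_iff)
  show ?thesis
  proof
    fix y show "projF {s} y = projF {r} y"
    proof (cases "y \<in> l2")
      case True
      have "projF {s} y = sc (ip y (sc c r)) (sc c r)" using True sv by (simp add: projF_single)
      also have "\<dots> = sc (c * cnj c * ip y r) r" using True rl ip_sc_right[OF rl True, of c]
        by (simp add: sc_def fun_eq_iff algebra_simps)
      also have "\<dots> = projF {r} y" using True cc by (simp add: projF_single)
      finally show ?thesis .
    qed (simp add: projF_out)
  qed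
qed

lemma qf_same:
  assumes r: "unitv r" and s: "unitv s" and eq: "projF {r} = projF {s}" and A: "bounded_op A"
  shows "qf A r = qf A s"
proof -
  have rl: "r \<in> l2" and sl: "s \<in> l2" using r s by (auto simp: unitv_def)
  have "(cmod (ip s r))\<^sup>2 = qf (projF {r}) s" using qf_proj[OF sl rl] by simp
  also have "\<dots> = qf (projF {s}) s" using eq by simp
  also have "\<dots> = 1" using qf_proj[OF sl sl] s by (simp add: unitv_def)
  finally have e: "(cmod (ip s r))\<^sup>2 = 1" .
  define c where "c = ip s r"
  have sv: "s = sc c r" using tp_eq1_vec[OF r s e] by (simp add: c_def)
  have cc: "c * cnj c = 1" using e unfolding c_def
    by (simp add: complex_mult_cnj cmod_power2 complex_eq_iff)
  have "ip (A s) s = c * cnj c * ip (A r) r"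
    unfolding sv using rl A by (simp add: bop_sc ip_sc_left ip_sc_right bop_l2)
  then show ?thesis unfolding qf_def using cc by simp
qed

locale Lmap1 = Lmap L 1 for L
begin

definition phi :: "vec \<Rightarrow> vec" where
  "phi x = (SOME r. unitv r \<and> L (projF {x}) = projF {r})"

lemma phi: assumes "unitv x" shows "unitv (phi x)" "L (projF {x}) = projF {phi x}"
proof -
  have "projF {x} \<in> Proj 1" using Proj1_single[OF assms] .
  then have "L (projF {x}) \<in> Proj 1" using proj by auto
  then have "\<exists>r. unitv r \<and> L (projF {x}) = projF {r}" using Proj1_structure by blast
  then have "unitv (phi x) \<and> L (projF {x}) = projF {phi x}" unfolding phi_def by (rule someI_ex)
  then show "unitv (phi x)" "L (projF {x}) = projF {phi x}" by auto
qed

end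


definition Eop :: "vec \<Rightarrow> vec \<Rightarrow> complex \<Rightarrow> op" where
  "Eop u v c = (\<lambda>y. if y \<in> l2 then sc (c * ip y v) u + sc (cnj c * ip y u) v else 0)"

lemma Eop_polar:
  assumes u: "u \<in> l2" and v: "v \<in> l2"
  shows "Eop u v c = lc (1/2) (projF {u + sc (cnj c) v}) (-1/2) (projF {u - sc (cnj c) v})"
proof
  fix y show "Eop u v c y = lc (1/2) (projF {u + sc (cnj c) v}) (-1/2) (projF {u - sc (cnj c) v}) y"
  proof (cases "y \<in> l2")
    case True
    have e1: "ip y (u + sc (cnj c) v) = ip y u + c * ip y v" using u v True by (simp add: ip_add_right ip_sc_right)
    have e2: "ip y (u - sc (cnj c) v) = ip y u - c * ip y v" using u v True by (simp add: ip_diff_right ip_sc_right)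
    have "lc (1/2) (projF {u + sc (cnj c) v}) (-1/2) (projF {u - sc (cnj c) v}) y
      = sc (complex_of_real (1/2)) (sc (ip y u + c * ip y v) (u + sc (cnj c) v)) + sc (complex_of_real (-1/2)) (sc (ip y u - c * ip y v) (u - sc (cnj c) v))"
      unfolding lc_apply projF_single[OF True] e1 e2 ..
    also have "\<dots> = Eop u v c y" using True unfolding Eop_def
      by (simp add: sc_def fun_eq_iff algebra_simps)
    finally show ?thesis by simp
  qed (simp add: Eop_def lc_fun projF_out fun_eq_iff)
qed

lemma Eop_Fsa: "u \<in> l2 \<Longrightarrow> v \<in> l2 \<Longrightarrow> Eop u v c \<in> Fsa"
  by (simp add: Eop_polar Fsa_lc Fsa_projF)

lemma Eop_split: "Eop u v c = lc (Re c) (Eop u v 1) (Im c) (Eop u v \<i>)"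
proof
  fix y show "Eop u v c y = lc (Re c) (Eop u v 1) (Im c) (Eop u v \<i>) y"
  proof (cases "y \<in> l2")
    case True
    have c: "c = complex_of_real (Re c) + \<i> * complex_of_real (Im c)" by (simp add: complex_eq_iff)
    have cc: "cnj c = complex_of_real (Re c) - \<i> * complex_of_real (Im c)" by (simp add: complex_eq_iff)
    show ?thesis using True unfolding lc_fun Eop_def
      apply (simp add: sc_def fun_eq_iff)
      apply (subst c) apply (subst cc)
      by (simp add: algebra_simps)
  qed (simp add: Eop_def lc_fun fun_eq_iff)
qed

lemma unit_comb:
  assumes u: "unitv u" and v: "unitv v" and uv: "ip u v = 0" and ab: "(cmod \<alpha>)\<^sup>2 + (cmod \<beta>)\<^sup>2 = 1"
  shows "unitv (sc \<alpha> u + sc \<beta> v)"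
proof -
  have ul: "u \<in> l2" and vl: "v \<in> l2" using u v by (auto simp: unitv_def)
  have vu: "ip v u = 0" using ip_cnj[OF ul vl] uv by simp
  have "ip (sc \<alpha> u + sc \<beta> v) (sc \<alpha> u + sc \<beta> v) = \<alpha> * cnj \<alpha> * ip u u + \<alpha> * cnj \<beta> * ip u v + \<beta> * cnj \<alpha> * ip v u + \<beta> * cnj \<beta> * ip v v"
    using ul vl by (simp add: ip_add_left ip_add_right ip_sc_left ip_sc_right algebra_simps)
  also have "\<dots> = \<alpha> * cnj \<alpha> + \<beta> * cnj \<beta>" using u v uv vu by (simp add: unitv_def)
  also have "\<dots> = 1" using ab by (simp add: complex_mult_cnj cmod_power2 complex_eq_iff)
  finally show ?thesis using ul vl by (simp add: unitv_def)
qed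

lemma proj_decomp:
  assumes u: "u \<in> l2" and v: "v \<in> l2"
  shows "projF {sc \<alpha> u + sc \<beta> v} = lc ((cmod \<alpha>)\<^sup>2) (projF {u}) 1 (lc ((cmod \<beta>)\<^sup>2) (projF {v}) 1 (Eop u v (\<alpha> * cnj \<beta>)))"
proof
  fix y show "projF {sc \<alpha> u + sc \<beta> v} y = lc ((cmod \<alpha>)\<^sup>2) (projF {u}) 1 (lc ((cmod \<beta>)\<^sup>2) (projF {v}) 1 (Eop u v (\<alpha> * cnj \<beta>))) y"
  proof (cases "y \<in> l2")
    case True
    have e: "ip y (sc \<alpha> u + sc \<beta> v) = cnj \<alpha> * ip y u + cnj \<beta> * ip y v"
      using u v True by (simp add: ip_add_right ip_sc_right)
    have a: "complex_of_real ((cmod \<alpha>)\<^sup>2) = \<alpha> * cnj \<alpha>" by (rule complex_norm_square)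
    have b: "complex_of_real ((cmod \<beta>)\<^sup>2) = \<beta> * cnj \<beta>" by (rule complex_norm_square)
    have "lc ((cmod \<alpha>)\<^sup>2) (projF {u}) 1 (lc ((cmod \<beta>)\<^sup>2) (projF {v}) 1 (Eop u v (\<alpha> * cnj \<beta>))) y
      = sc (\<alpha> * cnj \<alpha>) (sc (ip y u) u) + sc 1 (sc (\<beta> * cnj \<beta>) (sc (ip y v) v) + sc 1 (sc (\<alpha> * cnj \<beta> * ip y v) u + sc (cnj (\<alpha> * cnj \<beta>) * ip y u) v))"
      unfolding lc_apply projF_single[OF True] a b Eop_def using True by simp
    also have "\<dots> = projF {sc \<alpha> u + sc \<beta> v} y"
      unfolding projF_single[OF True] e by (simp add: sc_def fun_eq_iff algebra_simps)
    finally show ?thesis by simp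
  qed (simp add: Eop_def lc_fun projF_out fun_eq_iff)
qed

lemma real_param_le:
  assumes h: "\<And>\<alpha> b::real. \<alpha>\<^sup>2 + b\<^sup>2 = 1 \<Longrightarrow> \<alpha> * b * a \<le> b\<^sup>2"
  shows "a \<le> 0"
proof (rule ccontr)
  assume "\<not> a \<le> 0" then have a: "a > 0" by simp
  define t where "t = min (a/4) (1/2)"
  have t: "t > 0" "t \<le> 1/2" "t \<le> a/4" using a by (auto simp: t_def)
  have tp: "1 + t\<^sup>2 > 0" by (simp add: add_pos_nonneg)
  define \<alpha> where "\<alpha> = (1 - t\<^sup>2) / (1 + t\<^sup>2)"
  define b where "b = 2 * t / (1 + t\<^sup>2)"
  have "\<alpha>\<^sup>2 + b\<^sup>2 = ((1 - t\<^sup>2)\<^sup>2 + (2 * t)\<^sup>2) / (1 + t\<^sup>2)\<^sup>2"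
    unfolding \<alpha>_def b_def by (simp add: power_divide add_divide_distrib)
  also have "(1 - t\<^sup>2)\<^sup>2 + (2 * t)\<^sup>2 = (1 + t\<^sup>2)\<^sup>2" by (simp add: power2_eq_square algebra_simps)
  finally have "\<alpha>\<^sup>2 + b\<^sup>2 = 1" using tp by simp
  then have "\<alpha> * b * a \<le> b\<^sup>2" by (rule h)
  moreover have "\<alpha> * b * a = ((1 - t\<^sup>2) * (2 * t) * a) / (1 + t\<^sup>2)\<^sup>2"
    unfolding \<alpha>_def b_def by (simp add: power2_eq_square)
  moreover have "b\<^sup>2 = (2 * t)\<^sup>2 / (1 + t\<^sup>2)\<^sup>2" unfolding b_def by (simp add: power_divide)
  moreover have "(1 + t\<^sup>2)\<^sup>2 > 0" using tp by simp
  ultimately have "(1 - t\<^sup>2) * (2 * t) * a \<le> (2 * t)\<^sup>2" by (simp add: divide_le_cancel)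
  then have "2 * t * ((1 - t\<^sup>2) * a) \<le> 2 * t * (2 * t)" by (simp add: power2_eq_square mult_ac)
  then have "(1 - t\<^sup>2) * a \<le> 2 * t" using t by (simp only: mult_le_cancel_left_pos)
  moreover have "t\<^sup>2 \<le> (1/2)\<^sup>2" using t by (intro power_mono) auto
  then have "1 - t\<^sup>2 \<ge> 3/4" by (simp add: power2_eq_square)
  ultimately have "3/4 * a \<le> 2 * t" using a by (meson mult_right_mono order_trans less_imp_le)
  then show False using t a by linarith
qed

lemma real_param_zero:
  assumes h: "\<And>\<alpha> b::real. \<alpha>\<^sup>2 + b\<^sup>2 = 1 \<Longrightarrow> \<alpha> * b * a \<le> b\<^sup>2"
  shows "a = 0"
proof -
  have "a \<le> 0" by (rule real_param_le[OF h])
  moreover have "-a \<le> 0"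
  proof (rule real_param_le)
    fix \<alpha> b :: real assume "\<alpha>\<^sup>2 + b\<^sup>2 = 1"
    then have "\<alpha> * (-b) * a \<le> (-b)\<^sup>2" by (intro h) simp
    then show "\<alpha> * b * - a \<le> b\<^sup>2" by simp
  qed
  ultimately show ?thesis by simp
qed

context Lmap1
begin

lemma L_bounded: "T \<in> Fsa \<Longrightarrow> bounded_op (L T)"
  using L_Fsa by (auto simp: Fsa_def selfadjoint_op_def)

lemma bform_raw:
  assumes u: "unitv u" and v: "unitv v" and uv: "ip u v = 0"
  shows "qf (L (projF {sc \<alpha> u + sc \<beta> v})) (phi u)
       = (cmod \<alpha>)\<^sup>2 + (cmod \<beta>)\<^sup>2 * qf (L (projF {v})) (phi u)
         + Re (\<alpha> * cnj \<beta>) * qf (L (Eop u v 1)) (phi u) + Im (\<alpha> * cnj \<beta>) * qf (L (Eop u v \<i>)) (phi u)"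
proof -
  have ul: "u \<in> l2" and vl: "v \<in> l2" using u v by (auto simp: unitv_def)
  have r: "unitv (phi u)" and R: "L (projF {u}) = projF {phi u}" using phi[OF u] by auto
  have rl: "phi u \<in> l2" using r by (simp add: unitv_def)
  have F: "projF {u} \<in> Fsa" "projF {v} \<in> Fsa" "Eop u v 1 \<in> Fsa" "Eop u v \<i> \<in> Fsa"
    using ul vl by (auto intro: Fsa_projF Eop_Fsa)
  have F2: "Eop u v c \<in> Fsa" for c using ul vl by (rule Eop_Fsa)
  have F3: "lc a (projF {v}) 1 (Eop u v c) \<in> Fsa" for a c using F(2) F2 by (rule Fsa_lc)
  let ?c = "\<alpha> * cnj \<beta>"
  have "L (projF {sc \<alpha> u + sc \<beta> v}) = lc ((cmod \<alpha>)\<^sup>2) (L (projF {u})) 1 (lc ((cmod \<beta>)\<^sup>2) (L (projF {v})) 1 (lc (Re ?c) (L (Eop u v 1)) (Im ?c) (L (Eop u v \<i>))))"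
    unfolding proj_decomp[OF ul vl]
    apply (subst Llc[OF F(1) F3])
    apply (subst Llc[OF F(2) F2])
    apply (subst Eop_split[of u v ?c])
    apply (subst Llc[OF F(3) F(4)])
    by simp
  moreover have "bounded_op (projF {phi u})" using rl by (intro bounded_projF) simp
  moreover have "qf (projF {phi u}) (phi u) = 1" using qf_proj[OF rl rl] r by (simp add: unitv_def)
  moreover have "bounded_op (L (projF {v}))" "bounded_op (L (Eop u v 1))" "bounded_op (L (Eop u v \<i>))"
    using F L_bounded by auto
  ultimately show ?thesis
    using R rl by (simp add: qf_lc bounded_lc)
qed

lemma bform_le1:
  assumes u: "unitv u" and v: "unitv v" and uv: "ip u v = 0" and ab: "(cmod \<alpha>)\<^sup>2 + (cmod \<beta>)\<^sup>2 = 1"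
  shows "qf (L (projF {sc \<alpha> u + sc \<beta> v})) (phi u) \<le> 1"
proof -
  have x: "unitv (sc \<alpha> u + sc \<beta> v)" by (rule unit_comb[OF u v uv ab])
  have r: "unitv (phi u)" using phi[OF u] by auto
  show ?thesis using phi[OF x] qf_proj r tp_le1 by (simp add: unitv_def)
qed

lemma qf_proj_nonneg: "unitv r \<Longrightarrow> unitv x \<Longrightarrow> qf (L (projF {x})) r \<ge> 0"
  using phi[of x] qf_proj by (simp add: unitv_def)

lemma bform:
  assumes u: "unitv u" and v: "unitv v" and uv: "ip u v = 0" and ab: "(cmod \<alpha>)\<^sup>2 + (cmod \<beta>)\<^sup>2 = 1"
  shows "qf (L (projF {sc \<alpha> u + sc \<beta> v})) (phi u) = (cmod \<alpha>)\<^sup>2 + (cmod \<beta>)\<^sup>2 * qf (L (projF {v})) (phi u)"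
proof -
  define \<kappa> where "\<kappa> = qf (L (projF {v})) (phi u)"
  define a1 where "a1 = qf (L (Eop u v 1)) (phi u)"
  define a2 where "a2 = qf (L (Eop u v \<i>)) (phi u)"
  have k0: "\<kappa> \<ge> 0" unfolding \<kappa>_def using qf_proj_nonneg phi[OF u] v by blast
  have a1: "a1 = 0"
  proof (rule real_param_zero)
    fix p b :: real assume pb: "p\<^sup>2 + b\<^sup>2 = 1"
    have "qf (L (projF {sc (complex_of_real p) u + sc (complex_of_real b) v})) (phi u) \<le> 1"
      using pb by (intro bform_le1[OF u v uv]) simp
    then have "p\<^sup>2 + b\<^sup>2 * \<kappa> + p * b * a1 \<le> 1"
      unfolding bform_raw[OF u v uv] \<kappa>_def[symmetric] a1_def[symmetric] by simp
    then have "p * b * a1 \<le> b\<^sup>2 * (1 - \<kappa>)" using pb by (simp add: algebra_simps)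
    also have "\<dots> \<le> b\<^sup>2" using k0 by (simp add: mult_left_le)
    finally show "p * b * a1 \<le> b\<^sup>2" .
  qed
  have a2: "a2 = 0"
  proof -
    have "-a2 = 0"
    proof (rule real_param_zero)
      fix p b :: real assume pb: "p\<^sup>2 + b\<^sup>2 = 1"
      have "qf (L (projF {sc (complex_of_real p) u + sc (\<i> * complex_of_real b) v})) (phi u) \<le> 1"
        using pb by (intro bform_le1[OF u v uv]) (simp add: norm_mult)
      then have "p\<^sup>2 + b\<^sup>2 * \<kappa> - p * b * a2 \<le> 1"
        unfolding bform_raw[OF u v uv] \<kappa>_def[symmetric] a2_def[symmetric] by (simp add: norm_mult)
      then have "p * b * (-a2) \<le> b\<^sup>2 * (1 - \<kappa>)" using pb by (simp add: algebra_simps)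
      also have "\<dots> \<le> b\<^sup>2" using k0 by (simp add: mult_left_le)
      finally show "p * b * (-a2) \<le> b\<^sup>2" .
    qed
    then show ?thesis by simp
  qed
  show ?thesis unfolding bform_raw[OF u v uv] a1_def[symmetric] a2_def[symmetric] a1 a2 \<kappa>_def by simp
qed

end


lemma cmod_add_sq: "(cmod (a + b))\<^sup>2 = (cmod a)\<^sup>2 + (cmod b)\<^sup>2 + 2 * Re (a * cnj b)"
  unfolding cmod_power2 by (simp add: power2_eq_square algebra_simps)

lemma cmod_mult_sq: "(cmod (a * b))\<^sup>2 = (cmod a)\<^sup>2 * (cmod b)\<^sup>2"
  by (simp add: norm_mult power_mult_distrib)

lemma alg_contra:
  fixes t1 t2 q1 q2 \<sigma> :: complex and \<kappa> \<tau> :: real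
  assumes k: "0 < \<kappa>" "\<kappa> < 1" and tau: "\<tau>\<^sup>2 = 1 - \<kappa>" and sig: "(cmod \<sigma>)\<^sup>2 = \<kappa>"
    and tn: "(cmod t1)\<^sup>2 + (cmod t2)\<^sup>2 = 1" and qn: "(cmod q1)\<^sup>2 + (cmod q2)\<^sup>2 = 1"
    and t1: "(cmod t1)\<^sup>2 = (1 + \<kappa>) / 2" and q1: "(cmod q1)\<^sup>2 = (1 + \<kappa>) / 2"
    and ts: "(cmod (t1 * cnj \<sigma> + t2 * complex_of_real \<tau>))\<^sup>2 = (1 + \<kappa>) / 2"
    and qs: "(cmod (q1 * cnj \<sigma> + q2 * complex_of_real \<tau>))\<^sup>2 = (1 + \<kappa>) / 2"
    and tq: "(cmod (t1 * cnj q1 + t2 * cnj q2))\<^sup>2 = (1 + \<kappa>) / 2"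
  shows False
proof -
  define z where "z = t1 * cnj t2"
  define zq where "zq = q1 * cnj q2"
  define w where "w = cnj \<sigma> * complex_of_real \<tau>"
  have t2: "(cmod t2)\<^sup>2 = (1 - \<kappa>) / 2" using tn t1 by (simp add: field_simps)
  have q2: "(cmod q2)\<^sup>2 = (1 - \<kappa>) / 2" using qn q1 by (simp add: field_simps)
  have zn: "(cmod z)\<^sup>2 = (1 + \<kappa>) / 2 * ((1 - \<kappa>) / 2)" unfolding z_def cmod_mult_sq complex_mod_cnj t1 t2 ..
  have zqn: "(cmod zq)\<^sup>2 = (1 + \<kappa>) / 2 * ((1 - \<kappa>) / 2)" unfolding zq_def cmod_mult_sq complex_mod_cnj q1 q2 ..
  have wn: "(cmod w)\<^sup>2 = \<kappa> * (1 - \<kappa>)" unfolding w_def cmod_mult_sq using sig tau by simp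
  have "(cmod (t1 * cnj \<sigma> + t2 * complex_of_real \<tau>))\<^sup>2
        = (cmod t1)\<^sup>2 * \<kappa> + (cmod t2)\<^sup>2 * (1 - \<kappa>) + 2 * Re (z * w)"
    unfolding cmod_add_sq cmod_mult_sq using sig tau by (simp add: z_def w_def mult_ac)
  then have rz: "Re (z * w) = \<kappa> * (1 - \<kappa>) / 2" using ts t1 t2 by (simp add: field_simps)
  have "(cmod (q1 * cnj \<sigma> + q2 * complex_of_real \<tau>))\<^sup>2
        = (cmod q1)\<^sup>2 * \<kappa> + (cmod q2)\<^sup>2 * (1 - \<kappa>) + 2 * Re (zq * w)"
    unfolding cmod_add_sq cmod_mult_sq using sig tau by (simp add: zq_def w_def mult_ac)
  then have rzq: "Re (zq * w) = \<kappa> * (1 - \<kappa>) / 2" using qs q1 q2 by (simp add: field_simps)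
  have "(cmod (t1 * cnj q1 + t2 * cnj q2))\<^sup>2
        = (cmod t1)\<^sup>2 * (cmod q1)\<^sup>2 + (cmod t2)\<^sup>2 * (cmod q2)\<^sup>2 + 2 * Re (z * cnj zq)"
    unfolding cmod_add_sq cmod_mult_sq by (simp add: z_def zq_def mult_ac)
  then have rzz: "Re (z * cnj zq) = \<kappa> * (1 - \<kappa>) / 4" using tq t1 t2 q1 q2
    by (simp add: field_simps)
  define Z where "Z = z * w"
  define Q where "Q = zq * w"
  have ZQ: "Z * cnj Q = z * cnj zq * complex_of_real ((cmod w)\<^sup>2)"
    unfolding Z_def Q_def complex_norm_square by (simp add: mult_ac)
  have "Re (Z * cnj Q) = Re (z * cnj zq) * (cmod w)\<^sup>2" unfolding ZQ by simp
  also have "\<dots> = (\<kappa> * (1 - \<kappa>) / 4) * (\<kappa> * (1 - \<kappa>))" unfolding rzz wn ..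
  also have "\<dots> = (\<kappa> * (1 - \<kappa>) / 2)\<^sup>2" by (simp add: power2_eq_square)
  finally have m2: "Re (Z * cnj Q) = (\<kappa> * (1 - \<kappa>) / 2)\<^sup>2" .
  have Zn: "(cmod Z)\<^sup>2 = (1 + \<kappa>) / 2 * ((1 - \<kappa>) / 2) * (\<kappa> * (1 - \<kappa>))" unfolding Z_def cmod_mult_sq zn wn ..
  have Qn: "(cmod Q)\<^sup>2 = (1 + \<kappa>) / 2 * ((1 - \<kappa>) / 2) * (\<kappa> * (1 - \<kappa>))" unfolding Q_def cmod_mult_sq zqn wn ..
  define m where "m = \<kappa> * (1 - \<kappa>) / 2"
  define \<rho> where "\<rho> = (1 + \<kappa>) / 2 * ((1 - \<kappa>) / 2) * (\<kappa> * (1 - \<kappa>))"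
  have e1: "Re Z = m" using rz unfolding Z_def m_def .
  have e2: "Re Q = m" using rzq unfolding Q_def m_def .
  have e3: "m\<^sup>2 + (Im Z)\<^sup>2 = \<rho>" using Zn e1 unfolding \<rho>_def by (simp add: cmod_power2)
  have e4: "m\<^sup>2 + (Im Q)\<^sup>2 = \<rho>" using Qn e2 unfolding \<rho>_def by (simp add: cmod_power2)
  have e5: "m * m + Im Z * Im Q = m\<^sup>2" using m2 e1 e2 unfolding m_def[symmetric] by (simp add: power2_eq_square)
  have "Im Z * Im Q = 0" using e5 by (simp add: power2_eq_square)
  then have "(Im Z)\<^sup>2 * (Im Q)\<^sup>2 = 0" by (simp add: power_mult_distrib[symmetric])
  moreover have "(Im Z)\<^sup>2 = (Im Q)\<^sup>2" using e3 e4 by simp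
  ultimately have "(Im Z)\<^sup>2 = 0" by simp
  then have "\<rho> = m\<^sup>2" using e3 by simp
  moreover have "\<rho> - m\<^sup>2 = \<kappa> * (1 - \<kappa>)\<^sup>2 / 4" unfolding \<rho>_def m_def by (simp add: power2_eq_square field_simps)
  moreover have "\<kappa> * (1 - \<kappa>)\<^sup>2 / 4 > 0" using k by simp
  ultimately show False by simp
qed


definition c2 :: complex where "c2 = complex_of_real (1 / sqrt 2)"

lemma c2_sq: "c2 * c2 = 1/2"
  unfolding c2_def by (simp flip: of_real_mult)

lemma c2_cnj: "cnj c2 = c2" unfolding c2_def by simp

lemma c2_norm: "(cmod c2)\<^sup>2 = 1/2"
  unfolding c2_def norm_of_real by (simp add: power_divide)

lemma pair_sum:
  assumes u: "u \<in> l2" and v: "v \<in> l2" and w: "\<omega> * cnj \<omega> = 1"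
  shows "projF {sc c2 u + sc (c2 * \<omega>) v} + projF {sc c2 u + sc (- (c2 * \<omega>)) v} = projF {u} + projF {v}"
proof
  fix y show "(projF {sc c2 u + sc (c2 * \<omega>) v} + projF {sc c2 u + sc (- (c2 * \<omega>)) v}) y = (projF {u} + projF {v}) y"
  proof (cases "y \<in> l2")
    case True
    have e1: "ip y (sc c2 u + sc (c2 * \<omega>) v) = c2 * ip y u + c2 * cnj \<omega> * ip y v"
      using u v True by (simp add: ip_add_right ip_sc_right c2_cnj)
    have e2: "ip y (sc c2 u + sc (- (c2 * \<omega>)) v) = c2 * ip y u - c2 * cnj \<omega> * ip y v"
      using u v True by (simp add: ip_add_right ip_diff_right ip_sc_right c2_cnj)
    have "(projF {sc c2 u + sc (c2 * \<omega>) v} + projF {sc c2 u + sc (- (c2 * \<omega>)) v}) y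
      = sc (c2 * ip y u + c2 * cnj \<omega> * ip y v) (sc c2 u + sc (c2 * \<omega>) v) + sc (c2 * ip y u - c2 * cnj \<omega> * ip y v) (sc c2 u + sc (- (c2 * \<omega>)) v)"
      unfolding plus_fun_apply projF_single[OF True] e1 e2 ..
    also have "\<dots> = sc (2 * (c2 * c2)) (sc (ip y u) u) + sc (2 * (c2 * c2) * (\<omega> * cnj \<omega>)) (sc (ip y v) v)"
      by (simp add: sc_def fun_eq_iff algebra_simps)
    also have "\<dots> = (projF {u} + projF {v}) y"
      unfolding c2_sq w using True by (simp add: projF_single sc_def fun_eq_iff)
    finally show ?thesis .
  qed (simp add: projF_out)
qed

lemma in_span2:
  assumes r: "unitv r" and f: "unitv f" and rf: "ip r f = 0"
    and t: "unitv t" and t': "unitv t'"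
    and s: "s = sc \<sigma> r + sc \<tau> f"
    and eq: "projF {t} + projF {t'} = projF {r} + projF {s}"
  shows "t = sc (ip t r) r + sc (ip t f) f"
proof -
  have rl: "r \<in> l2" and fl: "f \<in> l2" and tl: "t \<in> l2" and t'l: "t' \<in> l2"
    using r f t t' by (auto simp: unitv_def)
  have sl: "s \<in> l2" unfolding s using rl fl by simp
  have fr: "ip f r = 0" using ip_cnj[OF rl fl] rf by simp
  define p where "p = sc (ip t r) r + sc (ip t f) f"
  define w where "w = t - p"
  have pl: "p \<in> l2" unfolding p_def using rl fl by simp
  have wl: "w \<in> l2" unfolding w_def p_def using rl fl tl by simp
  have wr: "ip w r = 0" unfolding w_def p_def using rl fl tl r fr
    by (simp add: ip_diff_left ip_add_left ip_sc_left unitv_def)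
  have wf: "ip w f = 0" unfolding w_def p_def using rl fl tl f rf
    by (simp add: ip_diff_left ip_add_left ip_sc_left unitv_def)
  have ws: "ip w s = 0" unfolding s using rl fl wl wr wf by (simp add: ip_add_right ip_sc_right)
  have "(projF {t} + projF {t'}) w = (projF {r} + projF {s}) w" using eq by simp
  then have "sc (ip w t) t + sc (ip w t') t' = sc (ip w r) r + sc (ip w s) s"
    using wl by (simp add: projF_single)
  then have "sc (ip w t) t + sc (ip w t') t' = 0" using wr ws by (simp add: sc_def fun_eq_iff)
  then have "ip (sc (ip w t) t + sc (ip w t') t') w = 0" by simp
  then have "ip w t * ip t w + ip w t' * ip t' w = 0" using tl t'l wl by (simp add: ip_add_left ip_sc_left)
  then have "ip w t * cnj (ip w t) + ip w t' * cnj (ip w t') = 0"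
    using ip_cnj[OF wl tl] ip_cnj[OF wl t'l] by simp
  then have "Re (ip w t * cnj (ip w t)) + Re (ip w t' * cnj (ip w t')) = 0"
    by (metis plus_complex.sel(1) zero_complex.sel(1))
  then have "(cmod (ip w t))\<^sup>2 + (cmod (ip w t'))\<^sup>2 = 0" by (simp add: cmod_sq_mult_cnj)
  then have wt: "ip w t = 0" by (simp add: add_nonneg_eq_0_iff)
  have "ip w w = ip w (t - p)" unfolding w_def[symmetric] ..
  also have "\<dots> = ip w t - ip w p" by (rule ip_diff_right[OF tl pl wl])
  also have "ip w p = cnj (ip t r) * ip w r + cnj (ip t f) * ip w f"
    unfolding p_def using wl rl fl by (simp add: ip_add_right ip_sc_right)
  finally have "ip w w = 0" using wt wr wf by simp
  then have "w = 0" using ip_self_zero[OF wl] by simp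
  then show ?thesis unfolding w_def p_def by simp
qed


lemma ip2:
  assumes r: "unitv r" and f: "unitv f" and rf: "ip r f = 0"
  shows "ip (sc a r + sc b f) (sc c r + sc d f) = a * cnj c + b * cnj d"
proof -
  have rl: "r \<in> l2" and fl: "f \<in> l2" using r f by (auto simp: unitv_def)
  have fr: "ip f r = 0" using ip_cnj[OF rl fl] rf by simp
  show ?thesis using rl fl r f rf fr
    by (simp add: ip_add_left ip_add_right ip_sc_left ip_sc_right unitv_def algebra_simps)
qed

lemma cmod_ip_sym: "x \<in> l2 \<Longrightarrow> y \<in> l2 \<Longrightarrow> cmod (ip x y) = cmod (ip y x)"
  using ip_cnj[of x y] by simp

context Lmap1
begin

definition kap :: "vec \<Rightarrow> vec \<Rightarrow> real" where "kap u v = qf (L (projF {v})) (phi u)"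

lemma kap_eq: "unitv u \<Longrightarrow> unitv v \<Longrightarrow> kap u v = (cmod (ip (phi u) (phi v)))\<^sup>2"
  unfolding kap_def using phi qf_proj by (simp add: unitv_def)

lemma kap_sym: "unitv u \<Longrightarrow> unitv v \<Longrightarrow> kap u v = kap v u"
  using kap_eq phi cmod_ip_sym by (simp add: unitv_def)

lemma kap_range: "unitv u \<Longrightarrow> unitv v \<Longrightarrow> 0 \<le> kap u v \<and> kap u v \<le> 1"
  using kap_eq phi tp_le1 by simp

lemma bform':
  assumes u: "unitv u" and v: "unitv v" and uv: "ip u v = 0" and ab: "(cmod \<alpha>)\<^sup>2 + (cmod \<beta>)\<^sup>2 = 1"
  shows "(cmod (ip (phi u) (phi (sc \<alpha> u + sc \<beta> v))))\<^sup>2 = (cmod \<alpha>)\<^sup>2 + (cmod \<beta>)\<^sup>2 * kap u v"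
proof -
  have x: "unitv (sc \<alpha> u + sc \<beta> v)" by (rule unit_comb[OF u v uv ab])
  have "qf (L (projF {sc \<alpha> u + sc \<beta> v})) (phi u) = (cmod (ip (phi u) (phi (sc \<alpha> u + sc \<beta> v))))\<^sup>2"
    using phi[OF x] phi[OF u] qf_proj by (simp add: unitv_def)
  then show ?thesis using bform[OF u v uv ab] unfolding kap_def by simp
qed

lemma L_add: "A \<in> Fsa \<Longrightarrow> B \<in> Fsa \<Longrightarrow> L (A + B) = L A + L B"
proof -
  assume A: "A \<in> Fsa" and B: "B \<in> Fsa"
  have e: "\<And>X Y. lc 1 X 1 Y = X + Y" by (simp add: lc_fun fun_eq_iff)
  show ?thesis using Llc[OF A B, of 1 1] unfolding e .
qed

lemma L_pair:
  assumes u: "unitv u" and v: "unitv v" and uv: "ip u v = 0" and w: "\<omega> * cnj \<omega> = 1"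
  shows "projF {phi (sc c2 u + sc (c2 * \<omega>) v)} + projF {phi (sc c2 u + sc (- (c2 * \<omega>)) v)}
       = projF {phi u} + projF {phi v}"
proof -
  have ul: "u \<in> l2" and vl: "v \<in> l2" using u v by (auto simp: unitv_def)
  have wn: "(cmod \<omega>)\<^sup>2 = 1" using w by (simp add: cmod_sq_mult_cnj)
  have n1: "(cmod c2)\<^sup>2 + (cmod (c2 * \<omega>))\<^sup>2 = 1" using wn c2_norm by (simp add: norm_mult power_mult_distrib)
  have n2: "(cmod c2)\<^sup>2 + (cmod (- (c2 * \<omega>)))\<^sup>2 = 1" using n1 by simp
  have x1: "unitv (sc c2 u + sc (c2 * \<omega>) v)" by (rule unit_comb[OF u v uv n1])
  have x2: "unitv (sc c2 u + sc (- (c2 * \<omega>)) v)" by (rule unit_comb[OF u v uv n2])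
  have "L (projF {sc c2 u + sc (c2 * \<omega>) v} + projF {sc c2 u + sc (- (c2 * \<omega>)) v}) = L (projF {u} + projF {v})"
    using pair_sum[OF ul vl w] by simp
  then show ?thesis
    using x1 x2 ul vl phi[OF x1] phi[OF x2] phi[OF u] phi[OF v]
    by (simp add: L_add Fsa_projF unitv_def)
qed

lemma kappa01:
  assumes u: "unitv u" and v: "unitv v" and uv: "ip u v = 0"
  shows "kap u v = 0 \<or> kap u v = 1"
proof (rule ccontr)
  assume nk: "\<not> (kap u v = 0 \<or> kap u v = 1)"
  define \<kappa> where "\<kappa> = kap u v"
  have k: "0 < \<kappa>" "\<kappa> < 1" using nk kap_range[OF u v] unfolding \<kappa>_def by auto
  have ul: "u \<in> l2" and vl: "v \<in> l2" using u v by (auto simp: unitv_def)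
  have vu: "ip v u = 0" using ip_cnj[OF ul vl] uv by simp
  define r where "r = phi u"
  define s where "s = phi v"
  have r: "unitv r" and s: "unitv s" using phi u v unfolding r_def s_def by auto
  have rl: "r \<in> l2" and sl: "s \<in> l2" using r s by (auto simp: unitv_def)
  define x1 where "x1 = sc c2 u + sc (c2 * 1) v"
  define x2 where "x2 = sc c2 u + sc (- (c2 * 1)) v"
  define x3 where "x3 = sc c2 u + sc (c2 * \<i>) v"
  define x4 where "x4 = sc c2 u + sc (- (c2 * \<i>)) v"
  have n1: "(cmod c2)\<^sup>2 + (cmod (c2 * 1))\<^sup>2 = 1" using c2_norm by simp
  have n2: "(cmod c2)\<^sup>2 + (cmod (- (c2 * 1)))\<^sup>2 = 1" using c2_norm by simp
  have n3: "(cmod c2)\<^sup>2 + (cmod (c2 * \<i>))\<^sup>2 = 1" using c2_norm by (simp add: norm_mult)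
  have n4: "(cmod c2)\<^sup>2 + (cmod (- (c2 * \<i>)))\<^sup>2 = 1" using c2_norm by (simp add: norm_mult)
  have ux1: "unitv x1" unfolding x1_def by (rule unit_comb[OF u v uv n1])
  have ux2: "unitv x2" unfolding x2_def by (rule unit_comb[OF u v uv n2])
  have ux3: "unitv x3" unfolding x3_def by (rule unit_comb[OF u v uv n3])
  have ux4: "unitv x4" unfolding x4_def by (rule unit_comb[OF u v uv n4])
  define t where "t = phi x1"
  define t' where "t' = phi x2"
  define q where "q = phi x3"
  define q' where "q' = phi x4"
  have t: "unitv t" "unitv t'" "unitv q" "unitv q'" using phi ux1 ux2 ux3 ux4 unfolding t_def t'_def q_def q'_def by auto
  have tl: "t \<in> l2" "q \<in> l2" using t by (auto simp: unitv_def)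
  have F1t: "projF {t} + projF {t'} = projF {r} + projF {s}"
    using L_pair[OF u v uv, of 1] unfolding t_def t'_def r_def s_def x1_def x2_def by simp
  have F1q: "projF {q} + projF {q'} = projF {r} + projF {s}"
    using L_pair[OF u v uv, of \<i>] unfolding q_def q'_def r_def s_def x3_def x4_def by simp
  define \<sigma> where "\<sigma> = ip s r"
  have sig: "(cmod \<sigma>)\<^sup>2 = \<kappa>" unfolding \<kappa>_def kap_eq[OF u v] \<sigma>_def r_def[symmetric] s_def[symmetric]
    using cmod_ip_sym[OF rl sl] by simp
  define \<tau> where "\<tau> = sqrt (1 - \<kappa>)"
  have tau: "\<tau> > 0" "\<tau>\<^sup>2 = 1 - \<kappa>" using k unfolding \<tau>_def by auto
  define g where "g = s - sc \<sigma> r"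
  have gl: "g \<in> l2" unfolding g_def using rl sl by simp
  have gr: "ip g r = 0" unfolding g_def using rl sl r by (simp add: ip_diff_left ip_sc_left \<sigma>_def unitv_def)
  have gg: "ip g g = complex_of_real (1 - \<kappa>)"
  proof -
    have "ip g g = ip s s - cnj \<sigma> * ip s r - \<sigma> * ip r s + \<sigma> * cnj \<sigma> * ip r r"
      unfolding g_def using rl sl
      by (simp add: ip_diff_left ip_diff_right ip_sc_left ip_sc_right algebra_simps)
    also have "\<dots> = 1 - \<sigma> * cnj \<sigma>"
      using r s ip_cnj[OF rl sl] by (simp add: unitv_def \<sigma>_def)
    also have "\<sigma> * cnj \<sigma> = complex_of_real \<kappa>" by (metis complex_norm_square sig)
    finally show ?thesis by simp
  qed
  define f where "f = sc (complex_of_real (1 / \<tau>)) g"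
  have fl: "f \<in> l2" unfolding f_def using gl by simp
  have fr: "ip f r = 0" unfolding f_def using gl rl gr by (simp add: ip_sc_left)
  have rf: "ip r f = 0" using ip_cnj[OF fl rl] fr by simp
  have ff: "ip f f = 1"
  proof -
    have "ip f f = complex_of_real (1 / \<tau>) * complex_of_real (1 / \<tau>) * ip g g"
      unfolding f_def using gl by (simp add: ip_sc_left ip_sc_right)
    also have "\<dots> = complex_of_real ((1 / \<tau>) * (1 / \<tau>) * (1 - \<kappa>))" unfolding gg by simp
    also have "(1 / \<tau>) * (1 / \<tau>) * (1 - \<kappa>) = 1" using tau k by (simp add: power2_eq_square)
    finally show ?thesis by simp
  qed
  have f: "unitv f" using fl ff by (simp add: unitv_def)
  have sdec: "s = sc \<sigma> r + sc (complex_of_real \<tau>) f"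
    unfolding f_def g_def using tau by (simp add: sc_def fun_eq_iff)
  define t1 where "t1 = ip t r"
  define t2 where "t2 = ip t f"
  define q1 where "q1 = ip q r"
  define q2 where "q2 = ip q f"
  have tdec: "t = sc t1 r + sc t2 f"
    unfolding t1_def t2_def by (rule in_span2[OF r f rf t(1) t(2) sdec F1t])
  have qdec: "q = sc q1 r + sc q2 f"
    unfolding q1_def q2_def by (rule in_span2[OF r f rf t(3) t(4) sdec F1q])
  have "ip t t = t1 * cnj t1 + t2 * cnj t2" by (subst (1 2) tdec) (rule ip2[OF r f rf])
  then have "t1 * cnj t1 + t2 * cnj t2 = 1" using t(1) by (simp add: unitv_def)
  then have "Re (t1 * cnj t1) + Re (t2 * cnj t2) = 1" by (metis one_complex.sel(1) plus_complex.sel(1))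
  then have tn: "(cmod t1)\<^sup>2 + (cmod t2)\<^sup>2 = 1" unfolding cmod_sq_mult_cnj .
  have "ip q q = q1 * cnj q1 + q2 * cnj q2" by (subst (1 2) qdec) (rule ip2[OF r f rf])
  then have "q1 * cnj q1 + q2 * cnj q2 = 1" using t(3) by (simp add: unitv_def)
  then have "Re (q1 * cnj q1) + Re (q2 * cnj q2) = 1" by (metis one_complex.sel(1) plus_complex.sel(1))
  then have qn: "(cmod q1)\<^sup>2 + (cmod q2)\<^sup>2 = 1" unfolding cmod_sq_mult_cnj .
  have ts_eq: "ip t s = t1 * cnj \<sigma> + t2 * complex_of_real \<tau>"
    by (subst tdec, subst sdec) (simp add: ip2[OF r f rf])
  have qs_eq: "ip q s = q1 * cnj \<sigma> + q2 * complex_of_real \<tau>"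
    by (subst qdec, subst sdec) (simp add: ip2[OF r f rf])
  have tq_eq: "ip t q = t1 * cnj q1 + t2 * cnj q2"
    by (subst tdec, subst qdec) (simp add: ip2[OF r f rf])
  have hA: "(cmod (ip r t))\<^sup>2 = (1 + \<kappa>) / 2"
    using bform'[OF u v uv n1] c2_norm unfolding r_def t_def x1_def \<kappa>_def by simp
  have hB: "(cmod (ip s t))\<^sup>2 = (1 + \<kappa>) / 2"
  proof -
    have e: "x1 = sc (c2 * 1) v + sc c2 u" unfolding x1_def by (simp add: add.commute)
    have "(cmod (c2 * 1))\<^sup>2 + (cmod c2)\<^sup>2 = 1" using n1 by simp
    from bform'[OF v u vu this] show ?thesis
      using c2_norm kap_sym[OF u v] unfolding s_def t_def e \<kappa>_def by simp
  qed
  have hC: "(cmod (ip r q))\<^sup>2 = (1 + \<kappa>) / 2"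
    using bform'[OF u v uv n3] c2_norm unfolding r_def q_def x3_def \<kappa>_def by (simp add: norm_mult)
  have hD: "(cmod (ip s q))\<^sup>2 = (1 + \<kappa>) / 2"
  proof -
    have e: "x3 = sc (c2 * \<i>) v + sc c2 u" unfolding x3_def by (simp add: add.commute)
    have "(cmod (c2 * \<i>))\<^sup>2 + (cmod c2)\<^sup>2 = 1" using n3 by simp
    from bform'[OF v u vu this] show ?thesis
      using c2_norm kap_sym[OF u v] unfolding s_def q_def e \<kappa>_def by (simp add: norm_mult)
  qed
  have x12: "ip x1 x2 = 0" unfolding x1_def x2_def ip2[OF u v uv] by (simp add: c2_cnj)
  have c2': "\<And>z. c2 * (c2 * z) = z / 2" using c2_sq by (simp add: mult.assoc[symmetric])
  have eu: "u = sc c2 x1 + sc c2 x2"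
    unfolding x1_def x2_def by (simp add: sc_def fun_eq_iff ring_distribs c2')
  have e3: "x3 = sc ((1 + \<i>) / 2) x1 + sc ((1 - \<i>) / 2) x2"
    unfolding x1_def x3_def x2_def by (simp add: sc_def fun_eq_iff field_simps)
  have nh: "(cmod ((1 + \<i>) / 2))\<^sup>2 + (cmod ((1 - \<i>) / 2))\<^sup>2 = 1" by (simp add: cmod_power2 power_divide)
  have hE1: "(cmod (ip t r))\<^sup>2 = 1/2 + 1/2 * kap x1 x2"
    using bform'[OF ux1 ux2 x12, of c2 c2] c2_norm unfolding eu[symmetric] r_def t_def by simp
  have hE2: "(cmod (ip t q))\<^sup>2 = 1/2 + 1/2 * kap x1 x2"
    using bform'[OF ux1 ux2 x12 nh] unfolding e3[symmetric] q_def t_def by (simp add: cmod_power2 power_divide)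
  have hE: "(cmod (ip t q))\<^sup>2 = (1 + \<kappa>) / 2"
    using hE1 hE2 hA cmod_ip_sym[OF rl tl(1)] by simp
  show False
  proof (rule alg_contra[OF k tau(2) sig tn qn])
    show "(cmod t1)\<^sup>2 = (1 + \<kappa>) / 2" using hA cmod_ip_sym[OF rl tl(1)] unfolding t1_def by simp
    show "(cmod q1)\<^sup>2 = (1 + \<kappa>) / 2" using hC cmod_ip_sym[OF rl tl(2)] unfolding q1_def by simp
    show "(cmod (t1 * cnj \<sigma> + t2 * complex_of_real \<tau>))\<^sup>2 = (1 + \<kappa>) / 2"
      using hB cmod_ip_sym[OF sl tl(1)] ts_eq by simp
    show "(cmod (q1 * cnj \<sigma> + q2 * complex_of_real \<tau>))\<^sup>2 = (1 + \<kappa>) / 2"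
      using hD cmod_ip_sym[OF sl tl(2)] qs_eq by simp
    show "(cmod (t1 * cnj q1 + t2 * cnj q2))\<^sup>2 = (1 + \<kappa>) / 2"
      using hE tq_eq by simp
  qed
qed

end


lemma ip_zero_lam[simp]: "ip (\<lambda>n. 0) y = 0" by (simp add: l2inner_def)

context Lmap1
begin

lemma kap1_eq:
  assumes u: "unitv u" and v: "unitv v" and k1: "kap u v = 1"
  shows "L (projF {v}) = L (projF {u})"
proof -
  have "projF {phi v} = projF {phi u}"
    using tp_eq1[of "phi u" "phi v"] phi u v k1 kap_eq[OF u v] by simp
  then show ?thesis using phi u v by simp
qed

lemma same_kap1:
  assumes u: "unitv u" and v: "unitv v" and eq: "L (projF {v}) = L (projF {u})"
  shows "kap u v = 1"
proof -
  have "kap u v = qf (L (projF {u})) (phi u)" unfolding kap_def eq ..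
  also have "\<dots> = 1" using phi[OF u] qf_proj[of "phi u" "phi u"] by (simp add: unitv_def)
  finally show ?thesis .
qed

lemma span_case:
  assumes u: "unitv u" and v: "unitv v" and uv: "ip u v = 0" and k1: "kap u v = 1"
    and ab: "(cmod \<alpha>)\<^sup>2 + (cmod \<beta>)\<^sup>2 = 1"
  shows "L (projF {sc \<alpha> u + sc \<beta> v}) = L (projF {u})"
proof -
  have x: "unitv (sc \<alpha> u + sc \<beta> v)" by (rule unit_comb[OF u v uv ab])
  have "(cmod (ip (phi u) (phi (sc \<alpha> u + sc \<beta> v))))\<^sup>2 = 1"
    using bform'[OF u v uv ab] k1 ab by simp
  then have "projF {phi (sc \<alpha> u + sc \<beta> v)} = projF {phi u}"
    using tp_eq1 phi u x by blast
  then show ?thesis using phi u x by simp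
qed

lemma perp_case:
  assumes u: "unitv u" and v: "unitv v" and uv: "ip u v = 0" and k1: "kap u v = 1"
    and z: "unitv z" and zu: "ip z u = 0" and zv: "ip z v = 0"
  shows "L (projF {z}) = L (projF {u})"
proof -
  have ul: "u \<in> l2" and vl: "v \<in> l2" and zl: "z \<in> l2" using u v z by (auto simp: unitv_def)
  have uz: "ip u z = 0" using ip_cnj[OF zl ul] zu by simp
  have "kap u z = 0 \<or> kap u z = 1" by (rule kappa01[OF u z uz])
  then show ?thesis
  proof
    assume k0: "kap u z = 0"
    define x where "x = sc c2 u + sc c2 z"
    have n: "(cmod c2)\<^sup>2 + (cmod c2)\<^sup>2 = 1" using c2_norm by simp
    have x: "unitv x" unfolding x_def by (rule unit_comb[OF u z uz n])
    have vu: "ip v u = 0" using ip_cnj[OF ul vl] uv by simp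
    have vz: "ip v z = 0" using ip_cnj[OF zl vl] zv by simp
    have vx: "ip v x = 0" unfolding x_def using ul zl vl vu vz by (simp add: ip_add_right ip_sc_right)
    have "kap v x = qf (L (projF {x})) (phi v)" by (simp add: kap_def)
    also have "\<dots> = qf (L (projF {x})) (phi u)"
    proof (rule qf_same[symmetric])
      show "unitv (phi u)" "unitv (phi v)" using phi u v by auto
      show "projF {phi u} = projF {phi v}" using kap1_eq[OF u v k1] phi u v by simp
      show "bounded_op (L (projF {x}))" using L_bounded Fsa_projF x by (simp add: unitv_def)
    qed
    also have "\<dots> = 1/2"
      using bform[OF u z uz n] k0 c2_norm unfolding x_def kap_def by simp
    finally have "kap v x = 1/2" .
    moreover have "kap v x = 0 \<or> kap v x = 1" by (rule kappa01[OF v x vx])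
    ultimately show ?thesis by simp
  next
    assume "kap u z = 1"
    then show ?thesis by (rule kap1_eq[OF u z])
  qed
qed

lemma collapse_all:
  assumes u: "unitv u" and v: "unitv v" and uv: "ip u v = 0" and k1: "kap u v = 1"
    and y: "unitv y"
  shows "L (projF {y}) = L (projF {u})"
proof -
  have ul: "u \<in> l2" and vl: "v \<in> l2" and yl: "y \<in> l2" using u v y by (auto simp: unitv_def)
  have vu: "ip v u = 0" using ip_cnj[OF ul vl] uv by simp
  define a where "a = ip y u"
  define b where "b = ip y v"
  define p where "p = sc a u + sc b v"
  define z0 where "z0 = y - p"
  have pl: "p \<in> l2" unfolding p_def using ul vl by simp
  have z0l: "z0 \<in> l2" unfolding z0_def using yl pl by simp
  have pu: "ip p u = a" unfolding p_def using ul vl u vu by (simp add: ip_add_left ip_sc_left unitv_def)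
  have pv: "ip p v = b" unfolding p_def using ul vl v uv by (simp add: ip_add_left ip_sc_left unitv_def)
  have z0u: "ip z0 u = 0" unfolding z0_def using yl pl ul pu by (simp add: ip_diff_left a_def)
  have z0v: "ip z0 v = 0" unfolding z0_def using yl pl vl pv by (simp add: ip_diff_left b_def)
  have pz0: "ip p z0 = 0"
  proof -
    have "ip z0 p = cnj a * ip z0 u + cnj b * ip z0 v" unfolding p_def using z0l ul vl by (simp add: ip_add_right ip_sc_right)
    then have "ip z0 p = 0" using z0u z0v by simp
    then show ?thesis using ip_cnj[OF z0l pl] by simp
  qed
  have z0p: "ip z0 p = 0" using ip_cnj[OF pl z0l] pz0 by simp
  have ydec: "y = p + z0" unfolding z0_def by simp
  have pp: "ip p p = a * cnj a + b * cnj b" unfolding p_def by (rule ip2[OF u v uv])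
  have "ip y y = ip p p + ip z0 z0" unfolding ydec using pl z0l pz0 z0p
    by (simp add: ip_add_left ip_add_right)
  then have norm: "(cmod a)\<^sup>2 + (cmod b)\<^sup>2 + nrm2 z0 = 1"
    using y pp z0l by (simp add: unitv_def ip_self complex_norm_square[symmetric] complex_eq_iff del: complex_norm_square)
  show ?thesis
  proof (cases "z0 = 0")
    case True
    then have "(cmod a)\<^sup>2 + (cmod b)\<^sup>2 = 1" using norm by (simp add: nrm2_def)
    moreover have "y = sc a u + sc b v" using ydec True p_def by simp
    ultimately show ?thesis using span_case[OF u v uv k1] by simp
  next
    case z0nz: False
    define nz where "nz = sqrt (nrm2 z0)"
    have nzp: "nz > 0" using nrm2_nonneg[OF z0l] nrm2_zero[OF z0l] z0nz unfolding nz_def by force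
    define z where "z = sc (complex_of_real (1 / nz)) z0"
    have zl: "z \<in> l2" unfolding z_def using z0l by simp
    have zz: "ip z z = 1"
    proof -
      have "nrm2 z = (1 / nz)\<^sup>2 * nrm2 z0" unfolding z_def using z0l nzp by (simp add: nrm2_sc norm_divide)
      also have "\<dots> = 1" using nzp nrm2_nonneg[OF z0l] unfolding nz_def by (simp add: power_divide)
      finally show ?thesis using zl by (simp add: ip_self)
    qed
    have zunit: "unitv z" using zl zz by (simp add: unitv_def)
    have zu: "ip z u = 0" unfolding z_def using z0l ul z0u by (simp add: ip_sc_left)
    have zv: "ip z v = 0" unfolding z_def using z0l vl z0v by (simp add: ip_sc_left)
    have Lz: "L (projF {z}) = L (projF {u})" by (rule perp_case[OF u v uv k1 zunit zu zv])
    show ?thesis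
    proof (cases "p = 0")
      case True
      have "a * cnj a + b * cnj b = 0" using pp True by simp
      then have "Re (a * cnj a) + Re (b * cnj b) = 0" by (metis plus_complex.sel(1) zero_complex.sel(1))
      then have "(cmod a)\<^sup>2 + (cmod b)\<^sup>2 = 0" unfolding cmod_sq_mult_cnj .
      then have "nz = 1" using norm unfolding nz_def by simp
      then have "y = z" unfolding z_def ydec True by (simp add: sc_def fun_eq_iff)
      then show ?thesis using Lz by simp
    next
      case pnz: False
      define np where "np = sqrt ((cmod a)\<^sup>2 + (cmod b)\<^sup>2)"
      have npp: "np > 0"
      proof -
        have "a \<noteq> 0 \<or> b \<noteq> 0" using pnz unfolding p_def by (auto simp: sc_def fun_eq_iff)
        then have "(cmod a)\<^sup>2 + (cmod b)\<^sup>2 > 0"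
        proof
          assume "a \<noteq> 0" then have "(cmod a)\<^sup>2 > 0" by simp
          then show ?thesis by (simp add: add_pos_nonneg)
        next
          assume "b \<noteq> 0" then have "(cmod b)\<^sup>2 > 0" by simp
          then show ?thesis by (simp add: add_nonneg_pos)
        qed
        then show ?thesis unfolding np_def by simp
      qed
      define a' where "a' = a / complex_of_real np"
      define b' where "b' = b / complex_of_real np"
      have npsq: "np\<^sup>2 = (cmod a)\<^sup>2 + (cmod b)\<^sup>2" unfolding np_def by simp
      have "(cmod a')\<^sup>2 + (cmod b')\<^sup>2 = ((cmod a)\<^sup>2 + (cmod b)\<^sup>2) / np\<^sup>2"
        unfolding a'_def b'_def using npp by (simp add: norm_divide power_divide add_divide_distrib)
      then have ab': "(cmod a')\<^sup>2 + (cmod b')\<^sup>2 = 1" unfolding npsq[symmetric] using npp by simp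
      define w where "w = sc a' u + sc b' v"
      have wunit: "unitv w" unfolding w_def by (rule unit_comb[OF u v uv ab'])
      have wl: "w \<in> l2" using wunit by (simp add: unitv_def)
      have Lw: "L (projF {w}) = L (projF {u})" unfolding w_def by (rule span_case[OF u v uv k1 ab'])
      have wz: "ip w z = 0"
      proof -
        have "ip z w = cnj a' * ip z u + cnj b' * ip z v" unfolding w_def using zl ul vl by (simp add: ip_add_right ip_sc_right)
        then have "ip z w = 0" using zu zv by simp
        then show ?thesis using ip_cnj[OF wl zl] by simp
      qed
      have kwz: "kap w z = 1" using same_kap1[OF wunit zunit] Lz Lw by simp
      have ydec2: "y = sc (complex_of_real np) w + sc (complex_of_real nz) z"
        unfolding ydec p_def w_def z_def a'_def b'_def using npp nzp by (simp add: sc_def fun_eq_iff algebra_simps)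
      have nn: "(cmod (complex_of_real np))\<^sup>2 + (cmod (complex_of_real nz))\<^sup>2 = 1"
        using norm npp nzp nrm2_nonneg[OF z0l] unfolding np_def nz_def by simp
      have "L (projF {y}) = L (projF {w})" unfolding ydec2 by (rule span_case[OF wunit zunit wz kwz nn])
      then show ?thesis using Lw by simp
    qed
  qed
qed

lemma no_collapse:
  assumes u: "unitv u" and v: "unitv v" and uv: "ip u v = 0"
  shows "kap u v \<noteq> 1"
proof
  assume k1: "kap u v = 1"
  have e: "unitv (basis_vec i)" for i by (simp add: unitv_def ip_basis)
  have coll: "projF {basis_vec i} = L (projF {u})" for i
  proof -
    have "projF {basis_vec i} \<in> L ` Proj 1" using Proj1_single[OF e] proj by simp
    then obtain P0 where P0: "P0 \<in> Proj 1" "L P0 = projF {basis_vec i}" by auto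
    obtain y where y: "unitv y" "P0 = projF {y}" using Proj1_structure[OF P0(1)] by blast
    have "L (projF {y}) = L (projF {u})" by (rule collapse_all[OF u v uv k1 y(1)])
    then show ?thesis using P0 y by simp
  qed
  have "projF {basis_vec 0} = projF {basis_vec 1}" using coll[of 0] coll[of 1] by simp
  then have "projF {basis_vec 0} (basis_vec 0) = projF {basis_vec 1} (basis_vec 0)" by simp
  then have "basis_vec 0 = (0::vec)" by (simp add: projF_single ip_basis sc_def fun_eq_iff)
  then have "basis_vec 0 0 = (0::complex)" by simp
  then show False by (simp add: basis_vec_def)
qed

lemma kap0: "unitv u \<Longrightarrow> unitv v \<Longrightarrow> ip u v = 0 \<Longrightarrow> kap u v = 0"
  using kappa01 no_collapse by blast

lemma tp_pres:
  assumes x: "unitv x" and y: "unitv y"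
  shows "(cmod (ip (phi x) (phi y)))\<^sup>2 = (cmod (ip x y))\<^sup>2"
proof -
  have xl: "x \<in> l2" and yl: "y \<in> l2" using x y by (auto simp: unitv_def)
  define a where "a = ip y x"
  define z0 where "z0 = y - sc a x"
  have z0l: "z0 \<in> l2" unfolding z0_def using xl yl by simp
  have z0x: "ip z0 x = 0" unfolding z0_def using xl yl x by (simp add: ip_diff_left ip_sc_left a_def unitv_def)
  have xz0: "ip x z0 = 0" using ip_cnj[OF z0l xl] z0x by simp
  have ydec: "y = sc a x + z0" unfolding z0_def by simp
  have "ip y y = a * cnj a * ip x x + ip z0 z0" unfolding ydec using xl z0l z0x xz0
    by (simp add: ip_add_left ip_add_right ip_sc_left ip_sc_right)
  then have norm: "(cmod a)\<^sup>2 + nrm2 z0 = 1"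
    using x y z0l nrm2_unit[OF x] by (simp add: unitv_def ip_self complex_norm_square[symmetric] complex_eq_iff del: complex_norm_square)
  have axy: "cmod (ip x y) = cmod a" unfolding a_def using cmod_ip_sym[OF xl yl] .
  show ?thesis
  proof (cases "z0 = 0")
    case True
    then have a1: "(cmod (ip y x))\<^sup>2 = 1" using norm by (simp add: nrm2_def a_def)
    have "projF {y} = projF {x}" using tp_eq1[OF x y] a1 cmod_ip_sym[OF xl yl] by simp
    then have "projF {phi y} = projF {phi x}" using phi x y by metis
    then have "qf (projF {phi y}) (phi x) = 1" using phi[OF x] qf_proj[of "phi x" "phi x"] by (simp add: unitv_def)
    then have "(cmod (ip (phi x) (phi y)))\<^sup>2 = 1" using phi x y qf_proj by (simp add: unitv_def)
    then show ?thesis using a1 axy a_def by simp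
  next
    case False
    define nz where "nz = sqrt (nrm2 z0)"
    have nzp: "nz > 0" using nrm2_nonneg[OF z0l] nrm2_zero[OF z0l] False unfolding nz_def by force
    define v where "v = sc (complex_of_real (1 / nz)) z0"
    have vl: "v \<in> l2" unfolding v_def using z0l by simp
    have vv: "ip v v = 1"
    proof -
      have "nrm2 v = (1 / nz)\<^sup>2 * nrm2 z0" unfolding v_def using z0l nzp by (simp add: nrm2_sc norm_divide)
      also have "\<dots> = 1" using nzp nrm2_nonneg[OF z0l] unfolding nz_def by (simp add: power_divide)
      finally show ?thesis using vl by (simp add: ip_self)
    qed
    have vunit: "unitv v" using vl vv by (simp add: unitv_def)
    have xv: "ip x v = 0" unfolding v_def using xl z0l xz0 by (simp add: ip_sc_right)
    have ydec2: "y = sc a x + sc (complex_of_real nz) v"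
      unfolding ydec v_def using nzp by (simp add: sc_def fun_eq_iff)
    have nn: "(cmod a)\<^sup>2 + (cmod (complex_of_real nz))\<^sup>2 = 1"
      using norm nzp nrm2_nonneg[OF z0l] unfolding nz_def by simp
    have "(cmod (ip (phi x) (phi y)))\<^sup>2 = (cmod a)\<^sup>2 + (cmod (complex_of_real nz))\<^sup>2 * kap x v"
      unfolding ydec2 by (rule bform'[OF x vunit xv nn])
    then show ?thesis using kap0[OF x vunit xv] axy by simp
  qed
qed

end


context Lmap1
begin

lemma qf_L_rcomb:
  assumes x: "unitv x"
  shows "X \<in> rcomb (Proj 1) \<Longrightarrow> qf (L X) (phi x) = qf X x"
proof (induction rule: rcomb.induct)
  case rz
  show ?case unfolding L0 by (simp add: qf_def)
next
  case (rs Q T a)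
  obtain w where w: "unitv w" "Q = projF {w}" using Proj1_structure rs(1) by blast
  have QF: "Q \<in> Fsa" using rs(1) Proj_Fsa by auto
  have TF: "T \<in> Fsa" using rcomb_Fsa[OF Proj_Fsa rs(2)] .
  have xl: "x \<in> l2" and wl: "w \<in> l2" using x w by (auto simp: unitv_def)
  have rl: "phi x \<in> l2" "phi w \<in> l2" using phi x w by (auto simp: unitv_def)
  have bQ: "bounded_op Q" "bounded_op T" using QF TF by (auto simp: Fsa_def selfadjoint_op_def)
  have "qf (L (lc a Q 1 T)) (phi x) = qf (lc a (L Q) 1 (L T)) (phi x)" using Llc[OF QF TF] by simp
  also have "\<dots> = a * qf (L Q) (phi x) + qf (L T) (phi x)"
    using L_bounded QF TF rl by (simp add: qf_lc)
  also have "qf (L Q) (phi x) = (cmod (ip (phi x) (phi w)))\<^sup>2"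
    using w phi[OF w(1)] qf_proj rl by simp
  also have "\<dots> = (cmod (ip x w))\<^sup>2" by (rule tp_pres[OF x w(1)])
  also have "\<dots> = qf Q x" using w qf_proj xl wl by simp
  finally show ?case using rs(3) bQ xl by (simp add: qf_lc)
qed

lemma L_kernel:
  assumes X: "X \<in> Fsa" and LX: "L X = 0"
  shows "X = 0"
proof -
  have sa: "selfadjoint_op X" using X by (simp add: Fsa_def)
  have bX: "bounded_op X" using sa by (simp add: selfadjoint_op_def)
  have Xr: "X \<in> rcomb (Proj 1)" using X Fsa_eq_rcomb[of 1] by simp
  have q0: "Re (ip (X x) x) = 0" if xl: "x \<in> l2" for x
  proof (cases "x = 0")
    case True then show ?thesis using bop_zero[OF bX] by simp
  next
    case False
    define n where "n = sqrt (nrm2 x)"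
    have np: "n > 0" using nrm2_nonneg[OF xl] nrm2_zero[OF xl] False unfolding n_def by force
    define u where "u = sc (complex_of_real (1 / n)) x"
    have ul: "u \<in> l2" unfolding u_def using xl by simp
    have "nrm2 u = (1 / n)\<^sup>2 * nrm2 x" unfolding u_def using xl np by (simp add: nrm2_sc norm_divide)
    also have "\<dots> = 1" using np nrm2_nonneg[OF xl] unfolding n_def by (simp add: power_divide)
    finally have uu: "unitv u" using ul by (simp add: unitv_def ip_self)
    have "qf X u = qf (L X) (phi u)" using qf_L_rcomb[OF uu Xr] by simp
    also have "\<dots> = 0" unfolding LX by (simp add: qf_def)
    finally have qu: "Re (ip (X u) u) = 0" by (simp add: qf_def)
    have xu: "x = sc (complex_of_real n) u" unfolding u_def using np by (simp add: sc_def fun_eq_iff)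
    have "ip (X x) x = complex_of_real n * complex_of_real n * ip (X u) u"
      unfolding xu using ul bX by (simp add: bop_sc ip_sc_left ip_sc_right bop_l2)
    then show ?thesis using qu by simp
  qed
  have Xx0: "X x = 0" if xl: "x \<in> l2" for x
  proof -
    define y where "y = X x"
    have yl: "y \<in> l2" unfolding y_def using bop_l2[OF bX xl] .
    have "Re (ip (X (x + y)) (x + y)) = 0" using q0 xl yl by simp
    moreover have "ip (X (x + y)) (x + y) = ip (X x) x + ip (X y) y + (ip (X x) y + ip (X y) x)"
    proof -
      have Xxl: "X x \<in> l2" and Xyl: "X y \<in> l2" using bop_l2[OF bX] xl yl by auto
      have xyl: "x + y \<in> l2" using xl yl by simp
      have "ip (X (x + y)) (x + y) = ip (X x + X y) (x + y)" using bop_add[OF bX xl yl] by simp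
      also have "\<dots> = ip (X x) (x + y) + ip (X y) (x + y)" by (rule ip_add_left[OF Xxl Xyl xyl])
      also have "\<dots> = (ip (X x) x + ip (X x) y) + (ip (X y) x + ip (X y) y)"
        by (simp only: ip_add_right[OF xl yl Xxl] ip_add_right[OF xl yl Xyl])
      finally show ?thesis by (simp add: algebra_simps)
    qed
    moreover have "ip (X y) x = cnj (ip (X x) y)"
    proof -
      have "ip (X y) x = ip y (X x)" using sa xl yl by (simp add: selfadjoint_op_def)
      also have "\<dots> = cnj (ip (X x) y)" by (rule ip_cnj[OF bop_l2[OF bX xl] yl])
      finally show ?thesis .
    qed
    ultimately have "Re (ip (X x) y) = 0" using q0[OF xl] q0[OF yl] by simp
    then have "nrm2 y = 0" unfolding y_def using ip_self[OF yl[unfolded y_def]] by simp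
    then show ?thesis using nrm2_zero[OF yl] unfolding y_def by simp
  qed
  show ?thesis
  proof
    fix x show "X x = 0 x"
      using Xx0 bop_out[OF bX] by (cases "x \<in> l2") auto
  qed
qed

lemma L_inj: "inj_on L Fsa"
proof (rule inj_onI)
  fix S T assume S: "S \<in> Fsa" and T: "T \<in> Fsa" and eq: "L S = L T"
  have "L (lc 1 S (-1) T) = lc 1 (L S) (-1) (L T)" by (rule Llc[OF S T])
  also have "\<dots> = 0" unfolding eq by (simp add: lc_fun fun_eq_iff)
  finally have "lc 1 S (-1) T = 0" using L_kernel Fsa_lc[OF S T] by blast
  then show "S = T" by (simp add: lc_fun fun_eq_iff)
qed

end


theorem proposition2:
  fixes L :: "op \<Rightarrow> op" and k :: nat
  assumes maps_into: "\<forall>T\<in>Fsa. L T \<in> T1sa"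
    and linear: "\<forall>S\<in>Fsa. \<forall>T\<in>Fsa. \<forall>a b::real.
                   L (op_add (op_scale a S) (op_scale b T)) = op_add (op_scale a (L S)) (op_scale b (L T))"
    and k_pos: "k \<ge> 1"
    and proj: "L ` Proj k = Proj k"
    and inj: "k > 1 \<longrightarrow> inj_on L Fsa"
  shows "bij_betw L Fsa Fsa"
proof -
  interpret Lmap L k using linear k_pos proj by unfold_locales
  have img: "L ` Fsa = Fsa" by (rule L_image)
  have injL: "inj_on L Fsa"
  proof (cases "k > 1")
    case True then show ?thesis using inj by simp
  next
    case False
    then have k1: "k = 1" using k_pos by simp
    interpret Lmap1 L using linear proj k1 by unfold_locales simp_all
    show ?thesis by (rule L_inj)
  qed
  show ?thesis unfolding bij_betw_def using img injL by simp
qed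

end
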